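(* Let $n\ge 1$ and $d\ge 2$ be integers. For every $n$-step process tensor Choi state $\Upsilon$ (as defined in the context), the non-Markovianity satisfies $\mathrm{N}\le 2(n-1)\ln d$, and this value is attained: the maximum of $\mathrm{N}$ over all $n$-step process tensors is $2(n-1)\ln d$.
   Context: An $n$-step process tensor with system dimension $d$ is represented by its Choi state $\Upsilon$, a density operator on $\mathcal{H}_{\mathrm{i}_0}\otimes\mathcal{H}_{\mathrm{o}_1}\otimes\cdots\otimes\mathcal{H}_{\mathrm{i}_{n-1}}\otimes\mathcal{H}_{\mathrm{o}_n}$ (each factor of dimension $d$) satisfying: for all $1\le j\le n$, $\mathrm{tr}_{\mathrm{o}_j}[\Upsilon_{1:j}]=\Upsilon_{1:j-1}\otimes\mathbb{I}_{\mathrm{i}_{j-1}}/d$, where $\Upsilon_{1:j}$ is the partial trace of $\Upsilon$ over $\mathrm{i}_j,\mathrm{o}_{j+1},\dots,\mathrm{i}_{n-1},\mathrm{o}_n$ (with $\Upsilon_{1:n}=\Upsilon$, $\Upsilon_{1:0}=1$). With von Neumann entropies (natural log), $S_j$ the entropy of the marginal of $\Upsilon$ on $\mathrm{i}_{j-1}\mathrm{o}_j$ and $S_{1:n}=S(\Upsilon)$, the non-Markovianity is $\mathrm{N}=\sum_{j=1}^n S_j - S_{1:n}$. *)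

theory Defs
  imports "Jordan_Normal_Form.Schur_Decomposition" "HOL-Computational_Algebra.Polynomial"
begin

text \<open>The Hilbert space of m qudits (each of dimension d) is C^(d^m); a basis
index i < d^m is read in little-endian mixed radix: the digit of factor k (0-based) is
(i div d^k) mod d. For a process tensor, the 2n factors are ordered
i_0, o_1, i_1, o_2, ..., i_(n-1), o_n, i.e. factor 2(j-1) is i_(j-1) and factor 2j-1 is o_j.\<close>

definition density_op :: "nat \<Rightarrow> complex mat \<Rightarrow> bool" where
  "density_op N A \<longleftrightarrow> A \<in> carrier_mat N N \<and> mat_adjoint A = A
     \<and> (\<forall>v \<in> carrier_vec N. 0 \<le> Re (conjugate v \<bullet> (A *\<^sub>v v)))
     \<and> (\<Sum>i < N. A $$ (i, i)) = 1"

text \<open>Marginal (partial trace over all other factors) of an operator A on m factors of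
dimension d, onto the l contiguous factors k, ..., k+l-1.\<close>
definition marg :: "nat \<Rightarrow> nat \<Rightarrow> nat \<Rightarrow> nat \<Rightarrow> complex mat \<Rightarrow> complex mat" where
  "marg d m k l A = mat (d ^ l) (d ^ l) (\<lambda>(a, b).
      \<Sum>x < d ^ k. \<Sum>y < d ^ (m - k - l).
        A $$ (x + d ^ k * a + d ^ (k + l) * y, x + d ^ k * b + d ^ (k + l) * y))"

text \<open>B \<otimes> I/d, where B acts on the first p factors and the identity acts on a new factor p.\<close>
definition tensor_maxmixed :: "nat \<Rightarrow> nat \<Rightarrow> complex mat \<Rightarrow> complex mat" where
  "tensor_maxmixed d p B = mat (d ^ (p + 1)) (d ^ (p + 1)) (\<lambda>(a, b).
      if a div d ^ p = b div d ^ p then B $$ (a mod d ^ p, b mod d ^ p) / of_nat d else 0)"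

text \<open>Upsilon_(1:j) is the marginal on the first 2j factors; the partial trace of it over o_j
 is the marginal on the first 2j-1 factors; Upsilon_(1:0) = 1 is the 1x1 marginal.\<close>
definition process_tensor :: "nat \<Rightarrow> nat \<Rightarrow> complex mat \<Rightarrow> bool" where
  "process_tensor d n U \<longleftrightarrow> density_op (d ^ (2 * n)) U \<and>
     (\<forall>j \<in> {1..n}. marg d (2 * n) 0 (2 * j - 1) U
                     = tensor_maxmixed d (2 * j - 2) (marg d (2 * n) 0 (2 * j - 2) U))"

text \<open>Von Neumann entropy (natural log): - sum of lambda ln lambda over the eigenvalues
(with algebraic multiplicity, i.e. roots of the characteristic polynomial); 0 ln 0 = 0.\<close>
definition vn_entropy :: "complex mat \<Rightarrow> real" where
  "vn_entropy A = - sum_mset (image_mset (\<lambda>z. Re z * ln (Re z)) (proots (char_poly A)))"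

definition non_markovianity :: "nat \<Rightarrow> nat \<Rightarrow> complex mat \<Rightarrow> real" where
  "non_markovianity d n U =
     (\<Sum>j = 1..n. vn_entropy (marg d (2 * n) (2 * j - 2) 2 U)) - vn_entropy U"

end

theory Submission
  imports Defs
begin

definition adj :: "complex mat \<Rightarrow> complex mat" where
  "adj A = mat (dim_col A) (dim_row A) (\<lambda>(i,j). cnj (A $$ (j,i)))"

lemma adj_carrier[simp]: "dim_row (adj A) = dim_col A" "dim_col (adj A) = dim_row A"
  by (auto simp: adj_def)

lemma adj_carrier_mat[simp]: "A \<in> carrier_mat n m \<Longrightarrow> adj A \<in> carrier_mat m n"
  by (auto simp: adj_def)

lemma adj_index[simp]: "i < dim_col A \<Longrightarrow> j < dim_row A \<Longrightarrow> adj A $$ (i,j) = cnj (A $$ (j,i))"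
  by (auto simp: adj_def)

lemma mat_adjoint_adj: "mat_adjoint A = adj A"
  by (rule eq_matI, auto simp: mat_adjoint_def adj_def mat_of_rows_def)

lemma mult_entry:
  assumes "A \<in> carrier_mat n m" "B \<in> carrier_mat m p" "i < n" "j < p"
  shows "(A * B) $$ (i,j) = (\<Sum>k<m. A $$ (i,k) * B $$ (k,j))"
  using assms by (simp add: scalar_prod_def atLeast0LessThan)

lemma adj_adj[simp]: "adj (adj A) = A"
  by (rule eq_matI, auto simp: adj_def)

lemma adj_mult:
  assumes "A \<in> carrier_mat n m" "B \<in> carrier_mat m p"
  shows "adj (A * B) = adj B * adj A"
proof (rule eq_matI)
  fix i j assume "i < dim_row (adj B * adj A)" "j < dim_col (adj B * adj A)"
  then have ij: "i < p" "j < n" using assms by auto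
  have "adj (A * B) $$ (i,j) = cnj ((A*B) $$ (j,i))" using ij assms by simp
  also have "\<dots> = (\<Sum>k<m. cnj (A $$ (j,k)) * cnj (B $$ (k,i)))"
    using ij by (subst mult_entry[OF assms(1,2)], auto simp: cnj_sum)
  also have "\<dots> = (adj B * adj A) $$ (i,j)"
    using ij assms by (subst mult_entry[of _ p m _ n], auto simp: mult.commute)
  finally show "adj (A * B) $$ (i,j) = (adj B * adj A) $$ (i,j)" .
qed (use assms in auto)

definition diag_of :: "nat \<Rightarrow> (nat \<Rightarrow> real) \<Rightarrow> complex mat" where
  "diag_of n d = mat n n (\<lambda>(i,j). if i = j then complex_of_real (d i) else 0)"

lemma diag_of_carrier[simp]: "diag_of n d \<in> carrier_mat n n"
  by (simp add: diag_of_def)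

lemma QDQ_entry:
  assumes Q: "Q \<in> carrier_mat n n" and i: "i < n" and j: "j < n"
  shows "(Q * diag_of n d * adj Q) $$ (i,j) = (\<Sum>k<n. Q $$ (i,k) * of_real (d k) * cnj (Q $$ (j,k)))"
proof -
  have QD: "Q * diag_of n d \<in> carrier_mat n n" using Q by auto
  have "(Q * diag_of n d * adj Q) $$ (i,j) = (\<Sum>k<n. (Q * diag_of n d) $$ (i,k) * adj Q $$ (k,j))"
    by (rule mult_entry[OF QD adj_carrier_mat[OF Q] i j])
  also have "\<dots> = (\<Sum>k<n. Q $$ (i,k) * of_real (d k) * cnj (Q $$ (j,k)))"
  proof (rule sum.cong[OF refl])
    fix k assume k: "k \<in> {..<n}"
    have "(Q * diag_of n d) $$ (i,k) = (\<Sum>l<n. Q $$ (i,l) * diag_of n d $$ (l,k))"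
      using k by (intro mult_entry[OF Q diag_of_carrier i]) auto
    also have "\<dots> = (\<Sum>l<n. if l = k then Q $$ (i,k) * of_real (d k) else 0)"
      using k by (intro sum.cong, auto simp: diag_of_def)
    also have "\<dots> = Q $$ (i,k) * of_real (d k)" using k by (simp add: sum.delta)
    finally show "(Q * diag_of n d) $$ (i,k) * adj Q $$ (k,j) = Q $$ (i,k) * of_real (d k) * cnj (Q $$ (j,k))"
      using k j Q by simp
  qed
  finally show ?thesis .
qed

lemma cscalar_real:
  fixes w :: "complex vec"
  assumes "w \<in> carrier_vec n" "w \<noteq> 0\<^sub>v n"
  shows "w \<bullet>c w = complex_of_real (Re (w \<bullet>c w))" "Re (w \<bullet>c w) > 0"
proof -
  have "w \<bullet>c w > 0" using assms by simp
  then show "w \<bullet>c w = complex_of_real (Re (w \<bullet>c w))" "Re (w \<bullet>c w) > 0"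
    by (auto simp: less_complex_def complex_eq_iff)
qed

lemma onb_first:
  fixes v :: "complex vec"
  assumes v: "v \<in> carrier_vec n" and v0: "v \<noteq> 0\<^sub>v n"
  shows "\<exists>W c. W \<in> carrier_mat n n \<and> adj W * W = 1\<^sub>m n \<and> (\<forall>k<n. W $$ (k,0) = c * v $ k)"
proof -
  interpret cof_vec_space n "TYPE(complex)" .
  define b where "b = basis_completion v"
  from basis_completion[OF v v0, folded b_def]
  have dist_b: "distinct b" and indep: "\<not> lin_dep (set b)" and bc: "set b \<subseteq> carrier_vec n"
    and hdb: "hd b = v" and len_b: "length b = n" by auto
  have n0: "n \<noteq> 0" using v v0 by auto
  from hdb len_b n0 obtain vs where bv: "b = v # vs" by (cases b, auto)
  define ws where "ws = gram_schmidt n b"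
  from gram_schmidt_result[OF bc dist_b indep ws_def]
  have orth: "corthogonal ws" and wsc: "set ws \<subseteq> carrier_vec n" and lws: "length ws = n"
    using len_b by auto
  have hdws: "hd ws = v" unfolding ws_def bv using v by simp
  have ws0: "ws ! 0 = v" using hdws lws n0 by (cases ws, auto)
  have wsi: "ws ! i \<in> carrier_vec n" if "i < n" for i using wsc lws that by auto
  have wsnz: "ws ! i \<noteq> 0\<^sub>v n" if "i < n" for i
  proof
    assume "ws ! i = 0\<^sub>v n"
    then have "ws ! i \<bullet>c ws ! i = 0" by simp
    with corthogonalD[OF orth, of i i] lws that show False by auto
  qed
  define r where "r i = Re (ws ! i \<bullet>c ws ! i)" for i
  define c where "c i = complex_of_real (1 / sqrt (r i))" for i
  define W where "W = mat n n (\<lambda>(k,i). c i * (ws ! i) $ k)"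
  have W: "W \<in> carrier_mat n n" by (simp add: W_def)
  have sp: "ws ! j \<bullet>c ws ! i = (\<Sum>k<n. (ws ! j) $ k * cnj ((ws ! i) $ k))" if "i < n" "j < n" for i j
    using wsi[OF that(1)] wsi[OF that(2)] by (simp add: scalar_prod_def atLeast0LessThan)
  have "adj W * W = 1\<^sub>m n"
  proof (rule eq_matI)
    fix i j assume "i < dim_row (1\<^sub>m n)" "j < dim_col (1\<^sub>m n)"
    then have ij: "i < n" "j < n" by auto
    have "(adj W * W) $$ (i,j) = (\<Sum>k<n. cnj (W $$ (k,i)) * W $$ (k,j))"
      using ij by (subst mult_entry[OF adj_carrier_mat[OF W] W], auto simp: W_def)
    also have "\<dots> = cnj (c i) * c j * (\<Sum>k<n. (ws ! j) $ k * cnj ((ws ! i) $ k))"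
      using ij by (auto simp: W_def sum_distrib_left intro!: sum.cong)
    also have "\<dots> = cnj (c i) * c j * (ws ! j \<bullet>c ws ! i)" using sp ij by simp
    also have "\<dots> = 1\<^sub>m n $$ (i,j)"
    proof (cases "i = j")
      case True
      have e: "ws ! i \<bullet>c ws ! i = complex_of_real (r i)" and p: "r i > 0"
        using cscalar_real[OF wsi[OF ij(1)] wsnz[OF ij(1)]] by (auto simp: r_def)
      have "cnj (c i) * c i * complex_of_real (r i) = complex_of_real ((1 / sqrt (r i)) * (1 / sqrt (r i)) * r i)"
        by (simp only: c_def complex_cnj_complex_of_real of_real_mult)
      also have "(1 / sqrt (r i)) * (1 / sqrt (r i)) * r i = 1" using p
        by (simp add: field_simps)
      finally show ?thesis using True e ij by simp
    next
      case False
      then have "ws ! j \<bullet>c ws ! i = 0" using corthogonalD[OF orth, of j i] lws ij by auto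
      then show ?thesis using False ij by simp
    qed
    finally show "(adj W * W) $$ (i,j) = 1\<^sub>m n $$ (i,j)" .
  qed (use W in auto)
  moreover have "\<forall>k<n. W $$ (k,0) = c 0 * v $ k" using n0 ws0 by (auto simp: W_def)
  ultimately show ?thesis using W by blast
qed

lemma assoc5:
  assumes "A \<in> carrier_mat n n" "B \<in> carrier_mat n n" "C \<in> carrier_mat n n" "D \<in> carrier_mat n n" "E \<in> carrier_mat n n"
  shows "(A * B) * C * (D * E) = A * (B * C * D) * E"
  using assms by (simp add: assoc_mult_mat[of _ n n _ n _ n])

lemma assoc5b:
  assumes "A \<in> carrier_mat n n" "B \<in> carrier_mat n n" "C \<in> carrier_mat n n" "D \<in> carrier_mat n n" "E \<in> carrier_mat n n"
  shows "A * (B * C * D) * E = (A * B) * C * (D * E)"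
  using assms by (simp add: assoc_mult_mat[of _ n n _ n _ n])

lemma spectral:
  assumes "A \<in> carrier_mat n n" "adj A = A"
  shows "\<exists>Q d. Q \<in> carrier_mat n n \<and> adj Q * Q = 1\<^sub>m n \<and> A = Q * diag_of n d * adj Q"
  using assms
proof (induction n arbitrary: A)
  case 0
  show ?case
    by (rule exI[of _ "1\<^sub>m 0"], rule exI[of _ "\<lambda>_. 0"], rule conjI, simp, rule conjI,
        rule eq_matI, auto, rule eq_matI, use 0 in auto)
next
  case (Suc n A)
  note A = Suc.prems(1) and herm = Suc.prems(2)
  obtain as where cp: "char_poly A = (\<Prod>a\<leftarrow>as. [:- a, 1:])" and las: "length as = Suc n"
    using char_poly_factorized[OF A] by auto
  obtain e as' where as: "as = e # as'" using las by (cases as, auto)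
  have "poly (char_poly A) e = 0" unfolding cp as by simp
  then have ev: "eigenvalue A e" using eigenvalue_root_char_poly[OF A] by simp
  define v where "v = find_eigenvector A e"
  have "eigenvector A v e" unfolding v_def by (rule find_eigenvector[OF A ev])
  then have v: "v \<in> carrier_vec (Suc n)" and v0: "v \<noteq> 0\<^sub>v (Suc n)" and Av: "A *\<^sub>v v = e \<cdot>\<^sub>v v"
    using A unfolding eigenvector_def by auto
  obtain W c where W: "W \<in> carrier_mat (Suc n) (Suc n)" and WW: "adj W * W = 1\<^sub>m (Suc n)"
    and Wc: "\<forall>k<Suc n. W $$ (k,0) = c * v $ k"
    using onb_first[OF v v0] by blast
  have WW': "W * adj W = 1\<^sub>m (Suc n)"
    by (rule mat_mult_left_right_inverse[OF adj_carrier_mat[OF W] W WW])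
  have AW0: "(A * W) $$ (k,0) = e * W $$ (k,0)" if k: "k < Suc n" for k
  proof -
    have cw: "col W 0 = c \<cdot>\<^sub>v v" using Wc W v by (intro eq_vecI, auto)
    have "(A * W) $$ (k,0) = (A *\<^sub>v col W 0) $ k" using A W k by simp
    also have "\<dots> = (c \<cdot>\<^sub>v (A *\<^sub>v v)) $ k" unfolding cw using mult_mat_vec[OF A v] by simp
    also have "\<dots> = c * e * v $ k" using Av k v by simp
    also have "\<dots> = e * W $$ (k,0)" using Wc k by simp
    finally show ?thesis .
  qed
  define B where "B = adj W * A * W"
  have B: "B \<in> carrier_mat (Suc n) (Suc n)" using A W unfolding B_def by auto
  have Bassoc: "B = adj W * (A * W)" unfolding B_def using A W by (simp add: assoc_mult_mat[of _ "Suc n" "Suc n"])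
  have B0: "B $$ (i,0) = (if i = 0 then e else 0)" if i: "i < Suc n" for i
  proof -
    have "B $$ (i,0) = (\<Sum>k<Suc n. adj W $$ (i,k) * (A * W) $$ (k,0))"
      unfolding Bassoc using A W i by (intro mult_entry[of _ "Suc n" "Suc n" _ "Suc n"], auto)
    also have "\<dots> = e * (\<Sum>k<Suc n. adj W $$ (i,k) * W $$ (k,0))"
      unfolding sum_distrib_left by (rule sum.cong, auto simp: AW0)
    also have "\<dots> = e * (adj W * W) $$ (i,0)"
      using W i by (subst mult_entry[of _ "Suc n" "Suc n" _ "Suc n"], auto)
    also have "\<dots> = (if i = 0 then e else 0)" using WW i by simp
    finally show ?thesis .
  qed
  have hB: "adj B = B"
  proof -
    have "adj B = adj W * adj (adj W * A)" unfolding B_def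
      using A W by (subst adj_mult[of _ "Suc n" "Suc n"], auto)
    also have "adj (adj W * A) = adj A * W"
      using A W by (subst adj_mult[of _ "Suc n" "Suc n"], auto)
    finally show ?thesis unfolding B_def herm using A W
      by (simp add: assoc_mult_mat[of _ "Suc n" "Suc n"])
  qed
  have Bsym: "B $$ (j,i) = cnj (B $$ (i,j))" if "i < Suc n" "j < Suc n" for i j
    using arg_cong[OF hB, of "\<lambda>M. M $$ (j,i)"] that B by auto
  have er: "e = complex_of_real (Re e)"
  proof -
    have "e = cnj e" using Bsym[of 0 0] B0[of 0] by simp
    then show ?thesis by (auto simp: complex_eq_iff)
  qed
  have B0': "B $$ (0,j) = (if j = 0 then e else 0)" if j: "j < Suc n" for j
  proof -
    have "B $$ (0,j) = cnj (B $$ (j,0))" using Bsym[of j 0] j by simp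
    also have "\<dots> = (if j = 0 then cnj e else 0)" using B0[OF j] by simp
    also have "cnj e = e" using er by (simp add: complex_eq_iff)
    finally show ?thesis .
  qed
  define A3 where "A3 = mat n n (\<lambda>(i,j). B $$ (Suc i, Suc j))"
  have A3: "A3 \<in> carrier_mat n n" unfolding A3_def by simp
  have hA3: "adj A3 = A3"
  proof (rule eq_matI)
    fix i j assume "i < dim_row A3" "j < dim_col A3"
    then have ij: "i < n" "j < n" using A3 by auto
    have "adj A3 $$ (i,j) = cnj (B $$ (Suc j, Suc i))" using ij by (simp add: A3_def)
    also have "\<dots> = B $$ (Suc i, Suc j)" using Bsym[of "Suc j" "Suc i"] ij by simp
    finally show "adj A3 $$ (i,j) = A3 $$ (i,j)" using ij by (simp add: A3_def)
  qed (use A3 in auto)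
  obtain Q3 d3 where Q3: "Q3 \<in> carrier_mat n n" and QQ3: "adj Q3 * Q3 = 1\<^sub>m n"
    and A3d: "A3 = Q3 * diag_of n d3 * adj Q3"
    using Suc.IH[OF A3 hA3] by blast
  define Q1 where "Q1 = mat (Suc n) (Suc n) (\<lambda>(i,j). if i = 0 then (if j = 0 then 1 else 0)
      else if j = 0 then 0 else Q3 $$ (i - 1, j - 1))"
  have Q1: "Q1 \<in> carrier_mat (Suc n) (Suc n)" unfolding Q1_def by simp
  have QQ1: "adj Q1 * Q1 = 1\<^sub>m (Suc n)"
  proof (rule eq_matI)
    fix i j assume "i < dim_row (1\<^sub>m (Suc n))" "j < dim_col (1\<^sub>m (Suc n))"
    then have ij: "i < Suc n" "j < Suc n" by auto
    have "(adj Q1 * Q1) $$ (i,j) = (\<Sum>k<Suc n. cnj (Q1 $$ (k,i)) * Q1 $$ (k,j))"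
      using ij Q1 by (subst mult_entry[of _ "Suc n" "Suc n" _ "Suc n"], auto)
    also have "\<dots> = cnj (Q1 $$ (0,i)) * Q1 $$ (0,j) + (\<Sum>k<n. cnj (Q1 $$ (Suc k,i)) * Q1 $$ (Suc k,j))"
      by (rule sum.lessThan_Suc_shift)
    also have "\<dots> = 1\<^sub>m (Suc n) $$ (i,j)"
    proof (cases "i = 0 \<or> j = 0")
      case True
      then show ?thesis using ij by (auto simp: Q1_def)
    next
      case False
      then obtain i' j' where ii: "i = Suc i'" and jj: "j = Suc j'" by (cases i; cases j, auto)
      have "(\<Sum>k<n. cnj (Q1 $$ (Suc k,i)) * Q1 $$ (Suc k,j)) = (\<Sum>k<n. cnj (Q3 $$ (k,i')) * Q3 $$ (k,j'))"
        using ij ii jj by (auto simp: Q1_def intro!: sum.cong)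
      also have "\<dots> = (adj Q3 * Q3) $$ (i',j')"
        using ij ii jj Q3 by (subst mult_entry[of _ n n _ n], auto)
      finally show ?thesis using QQ3 ii jj ij by (auto simp: Q1_def)
    qed
    finally show "(adj Q1 * Q1) $$ (i,j) = 1\<^sub>m (Suc n) $$ (i,j)" .
  qed (use Q1 in auto)
  define d where "d k = (if k = 0 then Re e else d3 (k - 1))" for k
  have BQ: "B = Q1 * diag_of (Suc n) d * adj Q1"
  proof (rule eq_matI)
    fix i j assume "i < dim_row (Q1 * diag_of (Suc n) d * adj Q1)" "j < dim_col (Q1 * diag_of (Suc n) d * adj Q1)"
    then have ij: "i < Suc n" "j < Suc n" using Q1 by auto
    have "(Q1 * diag_of (Suc n) d * adj Q1) $$ (i,j) = (\<Sum>k<Suc n. Q1 $$ (i,k) * of_real (d k) * cnj (Q1 $$ (j,k)))"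
      by (rule QDQ_entry[OF Q1 ij])
    also have "\<dots> = Q1 $$ (i,0) * of_real (d 0) * cnj (Q1 $$ (j,0)) + (\<Sum>k<n. Q1 $$ (i,Suc k) * of_real (d (Suc k)) * cnj (Q1 $$ (j,Suc k)))"
      by (rule sum.lessThan_Suc_shift)
    also have "\<dots> = B $$ (i,j)"
    proof (cases "i = 0 \<or> j = 0")
      case True
      then show ?thesis using ij B0 B0' er by (auto simp: Q1_def d_def)
    next
      case False
      then obtain i' j' where ii: "i = Suc i'" and jj: "j = Suc j'" by (cases i; cases j, auto)
      have "(\<Sum>k<n. Q1 $$ (i,Suc k) * of_real (d (Suc k)) * cnj (Q1 $$ (j,Suc k)))
          = (\<Sum>k<n. Q3 $$ (i',k) * of_real (d3 k) * cnj (Q3 $$ (j',k)))"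
        using ij ii jj by (auto simp: Q1_def d_def intro!: sum.cong)
      also have "\<dots> = A3 $$ (i',j')" unfolding A3d using ij ii jj by (subst QDQ_entry[OF Q3], auto)
      finally show ?thesis using ii jj ij by (auto simp: Q1_def A3_def)
    qed
    finally show "B $$ (i,j) = (Q1 * diag_of (Suc n) d * adj Q1) $$ (i,j)" by simp
  qed (use B Q1 in auto)
  define Q where "Q = W * Q1"
  have Q: "Q \<in> carrier_mat (Suc n) (Suc n)" unfolding Q_def using W Q1 by auto
  have aQ1: "adj Q1 \<in> carrier_mat (Suc n) (Suc n)" and aW: "adj W \<in> carrier_mat (Suc n) (Suc n)"
    using Q1 W by auto
  have i1: "adj W * (W * Q1) = Q1"
    using assoc_mult_mat[symmetric, OF aW W Q1] WW Q1 by simp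
  have WQ1: "W * Q1 \<in> carrier_mat (Suc n) (Suc n)" using W Q1 by auto
  have "adj Q * Q = adj Q1 * adj W * (W * Q1)"
    unfolding Q_def adj_mult[OF W Q1] ..
  also have "\<dots> = adj Q1 * (adj W * (W * Q1))" by (rule assoc_mult_mat[OF aQ1 aW WQ1])
  finally have "adj Q * Q = adj Q1 * (adj W * (W * Q1))" .
  then have QQ: "adj Q * Q = 1\<^sub>m (Suc n)" using i1 QQ1 by simp
  have "W * B * adj W = (W * adj W) * A * (W * adj W)"
    unfolding B_def using assoc5[OF W aW A W aW] by simp
  then have "A = W * B * adj W" using WW' A by simp
  also have "\<dots> = Q * diag_of (Suc n) d * adj Q"
    unfolding BQ Q_def adj_mult[OF W Q1] by (rule assoc5b[OF W Q1 diag_of_carrier aQ1 aW])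
  finally show ?case using Q QQ by blast
qed

lemma unitary_right:
  assumes Q: "Q \<in> carrier_mat n n" and QQ: "adj Q * Q = 1\<^sub>m n"
  shows "Q * adj Q = 1\<^sub>m n"
  by (rule mat_mult_left_right_inverse[OF adj_carrier_mat[OF Q] Q QQ])

lemma unitary_cols:
  assumes Q: "Q \<in> carrier_mat n n" and QQ: "adj Q * Q = 1\<^sub>m n" and i: "i < n" and j: "j < n"
  shows "(\<Sum>k<n. cnj (Q $$ (k,i)) * Q $$ (k,j)) = (if i = j then 1 else 0)"
proof -
  have "(\<Sum>k<n. cnj (Q $$ (k,i)) * Q $$ (k,j)) = (adj Q * Q) $$ (i,j)"
    using Q i j by (subst mult_entry[of _ n n _ n], auto)
  then show ?thesis using QQ i j by simp
qed

lemma unitary_rows: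
  assumes Q: "Q \<in> carrier_mat n n" and QQ: "adj Q * Q = 1\<^sub>m n" and i: "i < n" and j: "j < n"
  shows "(\<Sum>k<n. Q $$ (i,k) * cnj (Q $$ (j,k))) = (if i = j then 1 else 0)"
proof -
  have "(\<Sum>k<n. Q $$ (i,k) * cnj (Q $$ (j,k))) = (Q * adj Q) $$ (i,j)"
    using Q i j by (subst mult_entry[of _ n n _ n], auto)
  then show ?thesis using unitary_right[OF Q QQ] i j by simp
qed

lemma char_poly_decomp:
  assumes Q: "Q \<in> carrier_mat n n" and QQ: "adj Q * Q = 1\<^sub>m n" and A: "A = Q * diag_of n d * adj Q"
  shows "proots (char_poly A) = mset (map (\<lambda>k. complex_of_real (d k)) [0..<n])"
proof -
  have "similar_mat_wit A (diag_of n d) Q (adj Q)"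
    unfolding similar_mat_wit_def Let_def using Q QQ unitary_right[OF Q QQ] A by auto
  then have "similar_mat A (diag_of n d)" unfolding similar_mat_def by blast
  then have "char_poly A = char_poly (diag_of n d)" by (rule char_poly_similar)
  also have "\<dots> = (\<Prod>a\<leftarrow>diag_mat (diag_of n d). [:- a, 1:])"
    by (rule char_poly_upper_triangular[of _ n], auto simp: diag_of_def upper_triangular_def)
  also have "diag_mat (diag_of n d) = map (\<lambda>k. complex_of_real (d k)) [0..<n]"
    by (auto simp: diag_mat_def diag_of_def)
  finally have cp: "char_poly A = (\<Prod>a\<leftarrow>map (\<lambda>k. complex_of_real (d k)) [0..<n]. [:- a, 1:])" .
  have gen: "proots (\<Prod>a\<leftarrow>xs. [:- a, 1:]) = mset xs" for xs :: "complex list"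
  proof (induction xs)
    case (Cons a xs)
    have nz: "(\<Prod>a\<leftarrow>xs. [:- a, 1:]) \<noteq> (0::complex poly)" by (auto simp: prod_list_zero_iff)
    have "proots (\<Prod>a\<leftarrow>a#xs. [:- a, 1:]) = proots ([:- a, 1:] * (\<Prod>a\<leftarrow>xs. [:- a, 1:]))" by simp
    also have "\<dots> = proots [:- a, 1:] + proots (\<Prod>a\<leftarrow>xs. [:- a, 1:])"
      by (rule proots_mult[OF _ nz], simp)
    finally show ?case using Cons.IH by (simp add: proots_linear_factor)
  qed simp
  show ?thesis unfolding cp gen ..
qed

lemma vn_entropy_decomp:
  assumes Q: "Q \<in> carrier_mat n n" and QQ: "adj Q * Q = 1\<^sub>m n" and A: "A = Q * diag_of n d * adj Q"
  shows "vn_entropy A = (\<Sum>k<n. - (d k * ln (d k)))"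
proof -
  have "image_mset (\<lambda>z. Re z * ln (Re z)) (mset (map (\<lambda>k. complex_of_real (d k)) [0..<n]))
      = image_mset (\<lambda>k. d k * ln (d k)) (mset_set {..<n})"
    by (simp add: mset_map mset_upt multiset.map_comp o_def atLeast0LessThan)
  then show ?thesis unfolding vn_entropy_def char_poly_decomp[OF assms]
    by (simp add: sum_unfold_sum_mset[symmetric] sum_negf)
qed

lemma density_spec:
  assumes D: "density_op n A"
  shows "\<exists>Q d. Q \<in> carrier_mat n n \<and> adj Q * Q = 1\<^sub>m n \<and> A = Q * diag_of n d * adj Q
     \<and> (\<forall>k<n. d k \<ge> 0) \<and> (\<Sum>k<n. d k) = 1"
proof -
  have A: "A \<in> carrier_mat n n" and h: "adj A = A"
    and psd: "\<forall>v \<in> carrier_vec n. 0 \<le> Re (conjugate v \<bullet> (A *\<^sub>v v))"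
    and tr: "(\<Sum>i<n. A $$ (i, i)) = 1"
    using D unfolding density_op_def mat_adjoint_adj by auto
  obtain Q d where Q: "Q \<in> carrier_mat n n" and QQ: "adj Q * Q = 1\<^sub>m n" and Ad: "A = Q * diag_of n d * adj Q"
    using spectral[OF A h] by blast
  have aQ: "adj Q \<in> carrier_mat n n" using Q by simp
  have "adj Q * A * Q = (adj Q * Q) * diag_of n d * (adj Q * Q)"
    unfolding Ad using assoc5b[OF aQ Q diag_of_carrier aQ Q] 
    by (simp add: assoc_mult_mat[of _ n n _ n _ n] aQ Q)
  then have AQ: "adj Q * A * Q = diag_of n d" using QQ by (simp add: diag_of_def)
  have nn: "d k \<ge> 0" if k: "k < n" for k
  proof -
    have "complex_of_real (d k) = (adj Q * (A * Q)) $$ (k,k)"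
      using AQ k assoc_mult_mat[OF aQ A Q] by (simp add: diag_of_def)
    also have "\<dots> = (\<Sum>i<n. cnj (Q $$ (i,k)) * (A * Q) $$ (i,k))"
      using k A Q by (subst mult_entry[of _ n n _ n], auto)
    also have "\<dots> = conjugate (col Q k) \<bullet> (A *\<^sub>v col Q k)"
      using k A Q by (auto simp: scalar_prod_def atLeast0LessThan intro!: sum.cong)
    finally have "d k = Re (conjugate (col Q k) \<bullet> (A *\<^sub>v col Q k))"
      by (metis Re_complex_of_real)
    then show ?thesis using psd k Q by auto
  qed
  have "complex_of_real (\<Sum>k<n. d k) = (\<Sum>k<n. of_real (d k) * (\<Sum>i<n. cnj (Q $$ (i,k)) * Q $$ (i,k)))"
    using unitary_cols[OF Q QQ] by simp
  also have "\<dots> = (\<Sum>i<n. \<Sum>k<n. Q $$ (i,k) * of_real (d k) * cnj (Q $$ (i,k)))"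
    unfolding sum_distrib_left by (subst sum.swap, auto intro!: sum.cong simp: mult.commute mult.left_commute)
  also have "\<dots> = (\<Sum>i<n. A $$ (i,i))"
    unfolding Ad by (intro sum.cong, auto simp: QDQ_entry[OF Q])
  finally have "(\<Sum>k<n. d k) = 1" using tr by (metis of_real_eq_1_iff)
  then show ?thesis using Q QQ Ad nn by blast
qed

lemma ent_le_ln:
  fixes p :: "nat \<Rightarrow> real"
  assumes nn: "\<And>k. k < n \<Longrightarrow> p k \<ge> 0" and s: "(\<Sum>k<n. p k) = 1" and n: "n > 0"
  shows "(\<Sum>k<n. - (p k * ln (p k))) \<le> ln (real n)"
proof -
  have t: "- (p k * ln (p k)) - p k * ln (real n) \<le> 1 / real n - p k" if k: "k < n" for k
  proof (cases "p k = 0")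
    case True then show ?thesis using n by simp
  next
    case False
    then have pk: "p k > 0" using nn[OF k] by simp
    have "ln (1 / (real n * p k)) \<le> 1 / (real n * p k) - 1"
      by (rule ln_le_minus_one, use pk n in simp)
    then have "p k * ln (1 / (real n * p k)) \<le> p k * (1 / (real n * p k) - 1)"
      using pk by (simp add: mult_left_mono)
    moreover have "ln (1 / (real n * p k)) = - ln (real n) - ln (p k)"
      using pk n by (simp add: ln_div ln_mult)
    moreover have "p k * (1 / (real n * p k) - 1) = 1 / real n - p k"
      using pk n by (simp add: field_simps)
    ultimately show ?thesis by (simp add: algebra_simps)
  qed
  have "(\<Sum>k<n. - (p k * ln (p k))) - ln (real n) = (\<Sum>k<n. - (p k * ln (p k)) - p k * ln (real n))"
    using s by (simp add: sum_subtractf sum_distrib_right[symmetric])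
  also have "\<dots> \<le> (\<Sum>k<n. 1 / real n - p k)" by (rule sum_mono, rule t, simp)
  also have "\<dots> = 0" using s n by (simp add: sum_subtractf)
  finally show ?thesis by simp
qed

lemma swap3: "(\<Sum>i\<in>A. \<Sum>b\<in>B. \<Sum>k\<in>C. f i b k) = (\<Sum>k\<in>C. \<Sum>i\<in>A. \<Sum>b\<in>B. f i b k)"
proof -
  have "(\<Sum>i\<in>A. \<Sum>b\<in>B. \<Sum>k\<in>C. f i b k) = (\<Sum>i\<in>A. \<Sum>k\<in>C. \<Sum>b\<in>B. f i b k)"
    by (rule sum.cong[OF refl], rule sum.swap)
  also have "\<dots> = (\<Sum>k\<in>C. \<Sum>i\<in>A. \<Sum>b\<in>B. f i b k)" by (rule sum.swap)
  finally show ?thesis .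
qed

lemma swap3b: "(\<Sum>i\<in>A. \<Sum>b\<in>B. \<Sum>k\<in>C. f i b k) = (\<Sum>b\<in>B. \<Sum>k\<in>C. \<Sum>i\<in>A. f i b k)"
proof -
  have "(\<Sum>i\<in>A. \<Sum>b\<in>B. \<Sum>k\<in>C. f i b k) = (\<Sum>b\<in>B. \<Sum>i\<in>A. \<Sum>k\<in>C. f i b k)"
    by (rule sum.swap)
  also have "\<dots> = (\<Sum>b\<in>B. \<Sum>k\<in>C. \<Sum>i\<in>A. f i b k)" by (rule sum.cong[OF refl], rule sum.swap)
  finally show ?thesis .
qed

lemma key_real:
  fixes q :: "nat \<Rightarrow> nat \<Rightarrow> nat \<Rightarrow> real" and a l :: "nat \<Rightarrow> real"
  assumes qn: "\<And>i b k. i < m \<Longrightarrow> b < d \<Longrightarrow> k < K \<Longrightarrow> q i b k \<ge> 0"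
    and F1: "\<And>i. i < m \<Longrightarrow> (\<Sum>b<d. \<Sum>k<K. q i b k) = a i"
    and F2: "\<And>k. k < K \<Longrightarrow> (\<Sum>i<m. \<Sum>b<d. q i b k) = l k"
    and F3: "\<And>b k. b < d \<Longrightarrow> k < K \<Longrightarrow> (\<Sum>i<m. q i b k / a i) \<le> 1"
    and s: "(\<Sum>k<K. l k) = 1" and d: "d > 0"
  shows "(\<Sum>i<m. - (a i * ln (a i))) \<le> (\<Sum>k<K. - (l k * ln (l k))) + ln (real d)"
proof -
  have qa: "q i b k \<le> a i" if "i < m" "b < d" "k < K" for i b k
  proof -
    have "q i b k \<le> (\<Sum>k<K. q i b k)" using that qn by (intro member_le_sum, auto)
    also have "\<dots> \<le> (\<Sum>b<d. \<Sum>k<K. q i b k)"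
      using that qn by (intro member_le_sum[of b "{..<d}" "\<lambda>b. \<Sum>k<K. q i b k"], auto intro: sum_nonneg)
    finally show ?thesis using F1 that by simp
  qed
  have ql: "q i b k \<le> l k" if "i < m" "b < d" "k < K" for i b k
  proof -
    have "q i b k \<le> (\<Sum>b<d. q i b k)" using that qn by (intro member_le_sum, auto)
    also have "\<dots> \<le> (\<Sum>i<m. \<Sum>b<d. q i b k)"
      using that qn by (intro member_le_sum[of i "{..<m}" "\<lambda>i. \<Sum>b<d. q i b k"], auto intro: sum_nonneg)
    finally show ?thesis using F2 that by simp
  qed
  have tm: "q i b k * (ln (l k) - ln (real d) - ln (a i)) \<le> (l k / real d) * (q i b k / a i) - q i b k"
    if ibk: "i < m" "b < d" "k < K" for i b k
  proof (cases "q i b k = 0")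
    case True then show ?thesis by simp
  next
    case False
    then have qp: "q i b k > 0" using qn[OF ibk] by simp
    then have ap: "a i > 0" and lp: "l k > 0" using qa[OF ibk] ql[OF ibk] by auto
    have "ln (l k / (real d * a i)) \<le> l k / (real d * a i) - 1"
      by (rule ln_le_minus_one, use ap lp d in simp)
    then have "q i b k * ln (l k / (real d * a i)) \<le> q i b k * (l k / (real d * a i) - 1)"
      using qp by (simp add: mult_left_mono)
    moreover have "ln (l k / (real d * a i)) = ln (l k) - ln (real d) - ln (a i)"
      using ap lp d by (simp add: ln_div ln_mult)
    moreover have "q i b k * (l k / (real d * a i) - 1) = (l k / real d) * (q i b k / a i) - q i b k"
      using ap d by (simp add: field_simps)
    ultimately show ?thesis by simp
  qed
  define S where "S = (\<Sum>i<m. \<Sum>b<d. \<Sum>k<K. q i b k * (ln (l k) - ln (real d) - ln (a i)))"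
  have "S \<le> (\<Sum>i<m. \<Sum>b<d. \<Sum>k<K. (l k / real d) * (q i b k / a i) - q i b k)"
    unfolding S_def by (intro sum_mono tm, auto)
  also have "\<dots> = (\<Sum>i<m. \<Sum>b<d. \<Sum>k<K. (l k / real d) * (q i b k / a i)) - (\<Sum>i<m. \<Sum>b<d. \<Sum>k<K. q i b k)"
    by (simp only: sum_subtractf)
  also have "(\<Sum>i<m. \<Sum>b<d. \<Sum>k<K. (l k / real d) * (q i b k / a i)) = (\<Sum>b<d. \<Sum>k<K. \<Sum>i<m. (l k / real d) * (q i b k / a i))"
    by (rule swap3b)
  also have "\<dots> = (\<Sum>b<d. \<Sum>k<K. (l k / real d) * (\<Sum>i<m. q i b k / a i))"
    by (simp only: sum_distrib_left)
  also have "(\<Sum>i<m. \<Sum>b<d. \<Sum>k<K. q i b k) = (\<Sum>k<K. \<Sum>i<m. \<Sum>b<d. q i b k)"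
    by (rule swap3)
  also have "\<dots> = 1" using F2 s by simp
  also have "(\<Sum>b<d. \<Sum>k<K. (l k / real d) * (\<Sum>i<m. q i b k / a i)) \<le> (\<Sum>b<d. \<Sum>k<K. l k / real d)"
  proof (intro sum_mono)
    fix b k assume "b \<in> {..<d}" "k \<in> {..<K}"
    moreover have "l k \<ge> 0"
    proof -
      have "k < K" using \<open>k \<in> {..<K}\<close> by simp
      then have "(\<Sum>i<m. \<Sum>b<d. q i b k) \<ge> 0" using qn by (intro sum_nonneg, auto)
      then show ?thesis using F2 \<open>k < K\<close> by simp
    qed
    ultimately show "(l k / real d) * (\<Sum>i<m. q i b k / a i) \<le> l k / real d"
      using F3[of b k] d by (intro mult_left_le, auto)
  qed
  also have "(\<Sum>b<d. \<Sum>k<K. l k / real d) = 1"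
    unfolding sum_divide_distrib[symmetric] s using d by simp
  finally have S0: "S \<le> 0" by simp
  have "S = (\<Sum>k<K. l k * ln (l k)) - ln (real d) - (\<Sum>i<m. a i * ln (a i))"
  proof -
    have "S = (\<Sum>i<m. \<Sum>b<d. \<Sum>k<K. q i b k * ln (l k)) - (\<Sum>i<m. \<Sum>b<d. \<Sum>k<K. q i b k) * ln (real d)
        - (\<Sum>i<m. (\<Sum>b<d. \<Sum>k<K. q i b k) * ln (a i))"
      unfolding S_def by (simp only: right_diff_distrib sum_subtractf sum_distrib_right)
    also have "(\<Sum>i<m. \<Sum>b<d. \<Sum>k<K. q i b k * ln (l k)) = (\<Sum>k<K. \<Sum>i<m. \<Sum>b<d. q i b k * ln (l k))"
      by (rule swap3)
    also have "\<dots> = (\<Sum>k<K. (\<Sum>i<m. \<Sum>b<d. q i b k) * ln (l k))"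
      by (simp only: sum_distrib_right)
    also have "\<dots> = (\<Sum>k<K. l k * ln (l k))" using F2 by simp
    also have "(\<Sum>i<m. \<Sum>b<d. \<Sum>k<K. q i b k) = (\<Sum>k<K. \<Sum>i<m. \<Sum>b<d. q i b k)"
      by (rule swap3)
    also have "\<dots> = 1" using F2 s by simp
    also have "(\<Sum>i<m. (\<Sum>b<d. \<Sum>k<K. q i b k) * ln (a i)) = (\<Sum>i<m. a i * ln (a i))" using F1 by simp
    finally show ?thesis by simp
  qed
  with S0 show ?thesis by (simp add: sum_negf)
qed

lemma sum_lessThan_add: "(\<Sum>y<(a::nat) + c. f y) = (\<Sum>y<a. f y) + (\<Sum>x<c. f (x + a))"
  by (induction c) (simp_all add: add_ac)

lemma sum_split: "(\<Sum>y<(m::nat) * d. f y) = (\<Sum>b<d. \<Sum>x<m. f (x + m * b))"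
proof (induction d)
  case (Suc d)
  have "(\<Sum>y<m * Suc d. f y) = (\<Sum>y<m * d + m. f y)" by (simp add: add.commute)
  also have "\<dots> = (\<Sum>y<m * d. f y) + (\<Sum>x<m. f (x + m * d))" by (rule sum_lessThan_add)
  finally show ?case using Suc by simp
qed simp

lemma sum_delta_mult1:
  assumes "finite T" "t0 \<in> T"
  shows "(\<Sum>t\<in>T. (if t = t0 then (1::complex) else 0) * h t) = h t0"
proof -
  have "(\<Sum>t\<in>T. (if t = t0 then (1::complex) else 0) * h t) = (\<Sum>t\<in>T. if t = t0 then h t else 0)"
    by (rule sum.cong, auto)
  then show ?thesis using assms by (simp add: sum.delta)
qed

lemma sum_delta_mult2:
  assumes "finite T" "t0 \<in> T"
  shows "(\<Sum>t\<in>T. h t * cnj (if t = t0 then (1::complex) else 0)) = h t0"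
proof -
  have "(\<Sum>t\<in>T. h t * cnj (if t = t0 then (1::complex) else 0)) = (\<Sum>t\<in>T. if t = t0 then h t else 0)"
    by (rule sum.cong, auto)
  then show ?thesis using assms by (simp add: sum.delta)
qed

lemma bessel:
  fixes g :: "'i \<Rightarrow> 't \<Rightarrow> complex"
  assumes I: "finite I" and T: "finite T" and t0: "t0 \<in> T"
    and orth: "\<And>i j. i \<in> I \<Longrightarrow> j \<in> I \<Longrightarrow> i \<noteq> j \<Longrightarrow> (\<Sum>t\<in>T. g i t * cnj (g j t)) = 0"
    and norm: "\<And>i. i \<in> I \<Longrightarrow> (\<Sum>t\<in>T. g i t * cnj (g i t)) = 1 \<or> (\<forall>t\<in>T. g i t = 0)"
  shows "(\<Sum>i\<in>I. (cmod (g i t0))\<^sup>2) \<le> 1"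
proof -
  define s where "s = (\<Sum>i\<in>I. (cmod (g i t0))\<^sup>2)"
  have s_c: "complex_of_real s = (\<Sum>i\<in>I. cnj (g i t0) * g i t0)"
    unfolding s_def of_real_sum by (simp only: complex_norm_square, simp add: mult.commute)
  define z where "z t = (\<Sum>i\<in>I. cnj (g i t0) * g i t)" for t
  define e where "e t = (if t = t0 then (1::complex) else 0)" for t
  have zz: "(\<Sum>t\<in>T. z t * cnj (z t)) = complex_of_real s"
  proof -
    have "(\<Sum>t\<in>T. z t * cnj (z t)) = (\<Sum>t\<in>T. \<Sum>i\<in>I. \<Sum>j\<in>I. cnj (g i t0) * g j t0 * (g i t * cnj (g j t)))"
      unfolding z_def by (simp add: cnj_sum sum_product mult.commute mult.left_commute)
    also have "\<dots> = (\<Sum>i\<in>I. \<Sum>j\<in>I. \<Sum>t\<in>T. cnj (g i t0) * g j t0 * (g i t * cnj (g j t)))"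
    proof -
      have "(\<Sum>t\<in>T. \<Sum>i\<in>I. \<Sum>j\<in>I. cnj (g i t0) * g j t0 * (g i t * cnj (g j t)))
          = (\<Sum>i\<in>I. \<Sum>t\<in>T. \<Sum>j\<in>I. cnj (g i t0) * g j t0 * (g i t * cnj (g j t)))" by (rule sum.swap)
      also have "\<dots> = (\<Sum>i\<in>I. \<Sum>j\<in>I. \<Sum>t\<in>T. cnj (g i t0) * g j t0 * (g i t * cnj (g j t)))"
        by (rule sum.cong[OF refl], rule sum.swap)
      finally show ?thesis .
    qed
    also have "\<dots> = (\<Sum>i\<in>I. \<Sum>j\<in>I. cnj (g i t0) * g j t0 * (\<Sum>t\<in>T. g i t * cnj (g j t)))"
      by (simp add: sum_distrib_left)
    also have "\<dots> = (\<Sum>i\<in>I. cnj (g i t0) * g i t0 * (\<Sum>t\<in>T. g i t * cnj (g i t)))"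
    proof (rule sum.cong[OF refl])
      fix i assume i: "i \<in> I"
      have "(\<Sum>j\<in>I. cnj (g i t0) * g j t0 * (\<Sum>t\<in>T. g i t * cnj (g j t)))
          = (\<Sum>j\<in>I. if j = i then cnj (g i t0) * g i t0 * (\<Sum>t\<in>T. g i t * cnj (g i t)) else 0)"
        by (rule sum.cong[OF refl], use orth i in auto)
      also have "\<dots> = cnj (g i t0) * g i t0 * (\<Sum>t\<in>T. g i t * cnj (g i t))"
        using i I by (simp add: sum.delta)
      finally show "(\<Sum>j\<in>I. cnj (g i t0) * g j t0 * (\<Sum>t\<in>T. g i t * cnj (g j t)))
          = cnj (g i t0) * g i t0 * (\<Sum>t\<in>T. g i t * cnj (g i t))" .
    qed
    also have "\<dots> = (\<Sum>i\<in>I. cnj (g i t0) * g i t0)"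
      by (rule sum.cong[OF refl], use norm t0 in fastforce)
    finally show ?thesis using s_c by simp
  qed
  have ez: "(\<Sum>t\<in>T. e t * cnj (z t)) = complex_of_real s"
  proof -
    have "(\<Sum>t\<in>T. e t * cnj (z t)) = cnj (z t0)" unfolding e_def by (rule sum_delta_mult1[OF T t0])
    also have "\<dots> = cnj (complex_of_real s)" unfolding z_def s_c by (simp add: mult.commute)
    finally show ?thesis by simp
  qed
  have ze: "(\<Sum>t\<in>T. z t * cnj (e t)) = complex_of_real s"
  proof -
    have "(\<Sum>t\<in>T. z t * cnj (e t)) = z t0" unfolding e_def by (rule sum_delta_mult2[OF T t0])
    also have "\<dots> = complex_of_real s" unfolding z_def s_c by (simp add: mult.commute)
    finally show ?thesis .
  qed
  have ee: "(\<Sum>t\<in>T. e t * cnj (e t)) = 1" unfolding e_def by (rule sum_delta_mult2[OF T t0, of "\<lambda>t. if t = t0 then 1 else 0", simplified])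
  have "(\<Sum>t\<in>T. (e t - z t) * cnj (e t - z t))
      = (\<Sum>t\<in>T. e t * cnj (e t)) - (\<Sum>t\<in>T. e t * cnj (z t)) - (\<Sum>t\<in>T. z t * cnj (e t)) + (\<Sum>t\<in>T. z t * cnj (z t))"
    by (simp add: algebra_simps sum.distrib sum_subtractf)
  also have "\<dots> = complex_of_real (1 - s)" using ee ez ze zz by simp
  finally have eq: "(\<Sum>t\<in>T. (e t - z t) * cnj (e t - z t)) = complex_of_real (1 - s)" .
  have "(\<Sum>t\<in>T. (e t - z t) * cnj (e t - z t)) = complex_of_real (\<Sum>t\<in>T. (cmod (e t - z t))\<^sup>2)"
    by (simp only: of_real_sum complex_norm_square)
  with eq have "1 - s = (\<Sum>t\<in>T. (cmod (e t - z t))\<^sup>2)" by (metis of_real_eq_iff)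
  moreover have "(\<Sum>t\<in>T. (cmod (e t - z t))\<^sup>2) \<ge> 0" by (intro sum_nonneg, simp)
  ultimately show ?thesis unfolding s_def by simp
qed

lemma conj_diag:
  assumes Q: "Q \<in> carrier_mat n n" and QQ: "adj Q * Q = 1\<^sub>m n" and Ad: "A = Q * diag_of n d * adj Q"
  shows "adj Q * A * Q = diag_of n d"
proof -
  have aQ: "adj Q \<in> carrier_mat n n" using Q by simp
  have "adj Q * A * Q = (adj Q * Q) * diag_of n d * (adj Q * Q)"
    unfolding Ad using assoc5b[OF aQ Q diag_of_carrier aQ Q]
    by (simp add: assoc_mult_mat[of _ n n _ n _ n] aQ Q)
  then show ?thesis using QQ by (simp add: diag_of_def)
qed

lemma triple_entry:
  assumes Q: "Q \<in> carrier_mat n n" and A: "A \<in> carrier_mat n n" and i: "i < n" and j: "j < n"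
  shows "(adj Q * A * Q) $$ (i,j) = (\<Sum>x<n. \<Sum>x'<n. cnj (Q $$ (x,i)) * A $$ (x,x') * Q $$ (x',j))"
proof -
  have aQA: "adj Q * A \<in> carrier_mat n n" using Q A by auto
  have "(adj Q * A * Q) $$ (i,j) = (\<Sum>x'<n. (adj Q * A) $$ (i,x') * Q $$ (x',j))"
    by (rule mult_entry[OF aQA Q i j])
  also have "\<dots> = (\<Sum>x'<n. \<Sum>x<n. cnj (Q $$ (x,i)) * A $$ (x,x') * Q $$ (x',j))"
    by (rule sum.cong[OF refl], subst mult_entry[OF adj_carrier_mat[OF Q] A i], use i Q in \<open>auto simp: sum_distrib_right\<close>)
  also have "\<dots> = (\<Sum>x<n. \<Sum>x'<n. cnj (Q $$ (x,i)) * A $$ (x,x') * Q $$ (x',j))"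
    by (rule sum.swap)
  finally show ?thesis .
qed

lemma step1:
  fixes l :: "'k \<Rightarrow> 'a :: comm_ring"
  shows "(\<Sum>k\<in>K. l k * ((\<Sum>x\<in>X. u x * A x k) * (\<Sum>x'\<in>X. v x' * B x' k)))
       = (\<Sum>x\<in>X. \<Sum>x'\<in>X. u x * v x' * (\<Sum>k\<in>K. A x k * l k * B x' k))"
proof -
  have "(\<Sum>k\<in>K. l k * ((\<Sum>x\<in>X. u x * A x k) * (\<Sum>x'\<in>X. v x' * B x' k)))
      = (\<Sum>k\<in>K. \<Sum>x\<in>X. \<Sum>x'\<in>X. u x * v x' * (A x k * l k * B x' k))"
    by (simp add: sum_product sum_distrib_left mult_ac, rule sum.cong[OF refl], rule sum.swap)
  also have "\<dots> = (\<Sum>x\<in>X. \<Sum>x'\<in>X. \<Sum>k\<in>K. u x * v x' * (A x k * l k * B x' k))"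
    by (rule swap3b)
  also have "\<dots> = (\<Sum>x\<in>X. \<Sum>x'\<in>X. u x * v x' * (\<Sum>k\<in>K. A x k * l k * B x' k))"
    by (simp add: sum_distrib_left)
  finally show ?thesis .
qed

definition ptr :: "nat \<Rightarrow> nat \<Rightarrow> complex mat \<Rightarrow> complex mat" where
  "ptr m d R = mat m m (\<lambda>(x,x'). \<Sum>b<d. R $$ (x + m * b, x' + m * b))"

lemma idx_lt: "x < m \<Longrightarrow> b < d \<Longrightarrow> x + m * b < m * (d::nat)"
proof -
  assume "x < m" "b < d"
  then have "x + m * b < m + m * b" by simp
  also have "\<dots> = m * (Suc b)" by simp
  also have "\<dots> \<le> m * d" using \<open>b < d\<close> by (intro mult_le_mono2, simp)
  finally show ?thesis .
qed

lemma key_quantum: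
  fixes R Q F :: "complex mat" and l a :: "nat \<Rightarrow> real"
  assumes Q: "Q \<in> carrier_mat (m*d) (m*d)" and QQ: "adj Q * Q = 1\<^sub>m (m*d)"
    and Rd: "R = Q * diag_of (m*d) l * adj Q" and lnn: "\<And>k. k < m*d \<Longrightarrow> l k \<ge> 0"
    and ls: "(\<Sum>k<m*d. l k) = 1"
    and F: "F \<in> carrier_mat m m" and FF: "adj F * F = 1\<^sub>m m"
    and Ad: "ptr m d R = F * diag_of m a * adj F" and d: "d > 0"
  shows "(\<Sum>i<m. - (a i * ln (a i))) \<le> (\<Sum>k<m*d. - (l k * ln (l k))) + ln (real d)"
proof -
  define M where "M = m * d"
  define c where "c i b k = (\<Sum>x<m. cnj (F $$ (x,i)) * Q $$ (x + m*b, k))" for i b k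
  define q where "q i b k = l k * (cmod (c i b k))\<^sup>2" for i b k
  have Rent: "R $$ (y,y') = (\<Sum>k<M. Q $$ (y,k) * of_real (l k) * cnj (Q $$ (y',k)))" if "y < M" "y' < M" for y y'
    unfolding Rd M_def using that M_def by (intro QDQ_entry[OF Q], auto)
  have RA: "ptr m d R \<in> carrier_mat m m" by (simp add: ptr_def)
  have G: "(\<Sum>b<d. \<Sum>k<M. of_real (l k) * (c i b k * cnj (c j b k))) = (if i = j then complex_of_real (a i) else 0)"
    if ij: "i < m" "j < m" for i j
  proof -
    have "(\<Sum>b<d. \<Sum>k<M. of_real (l k) * (c i b k * cnj (c j b k)))
        = (\<Sum>b<d. \<Sum>x<m. \<Sum>x'<m. cnj (F $$ (x,i)) * F $$ (x',j) * R $$ (x + m*b, x' + m*b))"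
    proof (rule sum.cong[OF refl])
      fix b assume b: "b \<in> {..<d}"
      have "(\<Sum>k<M. of_real (l k) * (c i b k * cnj (c j b k)))
         = (\<Sum>k<M. of_real (l k) * ((\<Sum>x<m. cnj (F $$ (x,i)) * Q $$ (x + m*b, k)) * (\<Sum>x'<m. F $$ (x',j) * cnj (Q $$ (x' + m*b, k)))))"
        unfolding c_def by (simp add: cnj_sum)
      also have "\<dots> = (\<Sum>x<m. \<Sum>x'<m. cnj (F $$ (x,i)) * F $$ (x',j) * (\<Sum>k<M. Q $$ (x + m*b, k) * of_real (l k) * cnj (Q $$ (x' + m*b, k))))"
        by (rule step1)
      also have "\<dots> = (\<Sum>x<m. \<Sum>x'<m. cnj (F $$ (x,i)) * F $$ (x',j) * R $$ (x + m*b, x' + m*b))"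
        using b by (intro sum.cong refl, subst Rent, auto simp: M_def idx_lt)
      finally show "(\<Sum>k<M. of_real (l k) * (c i b k * cnj (c j b k)))
         = (\<Sum>x<m. \<Sum>x'<m. cnj (F $$ (x,i)) * F $$ (x',j) * R $$ (x + m*b, x' + m*b))" .
    qed
    also have "\<dots> = (\<Sum>x<m. \<Sum>x'<m. \<Sum>b<d. cnj (F $$ (x,i)) * F $$ (x',j) * R $$ (x + m*b, x' + m*b))"
      by (rule swap3b)
    also have "\<dots> = (\<Sum>x<m. \<Sum>x'<m. cnj (F $$ (x,i)) * ptr m d R $$ (x,x') * F $$ (x',j))"
      by (intro sum.cong refl, auto simp: ptr_def sum_distrib_left mult_ac)
    also have "\<dots> = (adj F * ptr m d R * F) $$ (i,j)"
      by (rule triple_entry[OF F RA ij, symmetric])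
    also have "\<dots> = diag_of m a $$ (i,j)" using conj_diag[OF F FF Ad] by simp
    finally show ?thesis using ij by (simp add: diag_of_def)
  qed
  have qc: "complex_of_real (q i b k) = of_real (l k) * (c i b k * cnj (c i b k))" for i b k
    unfolding q_def of_real_mult by (simp only: complex_norm_square)
  have qn: "q i b k \<ge> 0" if "k < M" for i b k
    unfolding q_def using lnn that M_def by simp
  have F1: "(\<Sum>b<d. \<Sum>k<M. q i b k) = a i" if i: "i < m" for i
  proof -
    have "complex_of_real (\<Sum>b<d. \<Sum>k<M. q i b k) = (\<Sum>b<d. \<Sum>k<M. of_real (l k) * (c i b k * cnj (c i b k)))"
      by (simp add: qc)
    also have "\<dots> = complex_of_real (a i)" using G[OF i i] by simp
    finally show ?thesis by (metis of_real_eq_iff)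
  qed
  have F2: "(\<Sum>i<m. \<Sum>b<d. q i b k) = l k" if k: "k < M" for k
  proof -
    have inner: "(\<Sum>i<m. c i b k * cnj (c i b k)) = (\<Sum>x<m. Q $$ (x + m*b, k) * cnj (Q $$ (x + m*b, k)))"
      if b: "b < d" for b
    proof -
      have "(\<Sum>i<m. c i b k * cnj (c i b k))
          = (\<Sum>i<m. 1 * ((\<Sum>x<m. Q $$ (x + m*b, k) * cnj (F $$ (x,i))) * (\<Sum>x'<m. cnj (Q $$ (x' + m*b, k)) * F $$ (x',i))))"
        unfolding c_def by (simp add: cnj_sum mult_ac)
      also have "\<dots> = (\<Sum>x<m. \<Sum>x'<m. Q $$ (x + m*b, k) * cnj (Q $$ (x' + m*b, k)) * (\<Sum>i<m. cnj (F $$ (x,i)) * 1 * F $$ (x',i)))"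
        by (rule step1)
      also have "\<dots> = (\<Sum>x<m. \<Sum>x'<m. if x' = x then Q $$ (x + m*b, k) * cnj (Q $$ (x + m*b, k)) else 0)"
      proof (intro sum.cong refl)
        fix x x' assume "x \<in> {..<m}" "x' \<in> {..<m}"
        then have "(\<Sum>i<m. cnj (F $$ (x,i)) * 1 * F $$ (x',i)) = (if x' = x then 1 else 0)"
          using unitary_rows[OF F FF, of x' x] by (simp add: mult.commute)
        then show "Q $$ (x + m*b, k) * cnj (Q $$ (x' + m*b, k)) * (\<Sum>i<m. cnj (F $$ (x,i)) * 1 * F $$ (x',i))
           = (if x' = x then Q $$ (x + m*b, k) * cnj (Q $$ (x + m*b, k)) else 0)" by simp
      qed
      also have "\<dots> = (\<Sum>x<m. Q $$ (x + m*b, k) * cnj (Q $$ (x + m*b, k)))"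
        by (simp add: sum.delta)
      finally show ?thesis .
    qed
    have "(\<Sum>b<d. \<Sum>i<m. c i b k * cnj (c i b k)) = (\<Sum>b<d. \<Sum>x<m. Q $$ (x + m*b, k) * cnj (Q $$ (x + m*b, k)))"
      using inner by simp
    also have "\<dots> = (\<Sum>y<M. Q $$ (y, k) * cnj (Q $$ (y, k)))"
      unfolding M_def by (rule sum_split[symmetric])
    also have "\<dots> = (\<Sum>y<M. cnj (Q $$ (y, k)) * Q $$ (y, k))" by (simp add: mult.commute)
    also have "\<dots> = 1" using unitary_cols[OF Q QQ, of k k] k M_def by simp
    finally have one: "(\<Sum>b<d. \<Sum>i<m. c i b k * cnj (c i b k)) = 1" .
    have "complex_of_real (\<Sum>i<m. \<Sum>b<d. q i b k) = of_real (l k) * (\<Sum>b<d. \<Sum>i<m. c i b k * cnj (c i b k))"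
      by (simp add: qc sum_distrib_left sum.swap[of _ "{..<m}" "{..<d}"])
    also have "\<dots> = complex_of_real (l k)" using one by simp
    finally show ?thesis by (metis of_real_eq_iff)
  qed
  have anonneg: "a i \<ge> 0" if "i < m" for i
    using F1[OF that] qn by (metis (no_types, lifting) lessThan_iff sum_nonneg)
  have F3: "(\<Sum>i<m. q i b k / a i) \<le> 1" if bk: "b < d" "k < M" for b k
  proof -
    define g where "g i t = (if a i > 0 then complex_of_real (sqrt (l (snd t)) / sqrt (a i)) * c i (fst t) (snd t) else 0)" for i t
    have gsum: "(\<Sum>t\<in>{..<d} \<times> {..<M}. g i t * cnj (g j t))
        = (if a i > 0 \<and> a j > 0 then complex_of_real (1 / (sqrt (a i) * sqrt (a j))) * (\<Sum>b<d. \<Sum>k<M. of_real (l k) * (c i b k * cnj (c j b k))) else 0)"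
      if ij: "i < m" "j < m" for i j
    proof -
      have "(\<Sum>t\<in>{..<d} \<times> {..<M}. g i t * cnj (g j t)) = (\<Sum>b<d. \<Sum>k<M. g i (b,k) * cnj (g j (b,k)))"
        by (simp add: sum.cartesian_product)
      also have "\<dots> = (\<Sum>b<d. \<Sum>k<M. if a i > 0 \<and> a j > 0 then complex_of_real (1 / (sqrt (a i) * sqrt (a j))) * (of_real (l k) * (c i b k * cnj (c j b k))) else 0)"
      proof (intro sum.cong refl)
        fix b k assume "k \<in> {..<M}"
        then have lk: "l k \<ge> 0" using lnn M_def by simp
        have rr: "sqrt (l k) / sqrt (a i) * (sqrt (l k) / sqrt (a j)) = 1 / (sqrt (a i) * sqrt (a j)) * l k"
          using lk real_sqrt_mult_self[of "l k"] by (simp del: real_sqrt_mult_self)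
        have "complex_of_real (sqrt (l k) / sqrt (a i)) * c i b k * cnj (complex_of_real (sqrt (l k) / sqrt (a j)) * c j b k)
            = complex_of_real (sqrt (l k) / sqrt (a i) * (sqrt (l k) / sqrt (a j))) * (c i b k * cnj (c j b k))"
          by (simp only: complex_cnj_mult complex_cnj_complex_of_real of_real_mult mult_ac)
        also have "\<dots> = complex_of_real (1 / (sqrt (a i) * sqrt (a j))) * (of_real (l k) * (c i b k * cnj (c j b k)))"
          by (simp only: rr of_real_mult mult_ac)
        finally have pr: "complex_of_real (sqrt (l k) / sqrt (a i)) * c i b k * cnj (complex_of_real (sqrt (l k) / sqrt (a j)) * c j b k)
            = complex_of_real (1 / (sqrt (a i) * sqrt (a j))) * (of_real (l k) * (c i b k * cnj (c j b k)))" .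
        show "g i (b,k) * cnj (g j (b,k)) = (if a i > 0 \<and> a j > 0 then complex_of_real (1 / (sqrt (a i) * sqrt (a j))) * (of_real (l k) * (c i b k * cnj (c j b k))) else 0)"
          unfolding g_def fst_conv snd_conv
          by (cases "a i > 0"; cases "a j > 0") (simp_all only: pr if_True if_False simp_thms mult_zero_left mult_zero_right complex_cnj_zero)
      qed
      also have "\<dots> = (if a i > 0 \<and> a j > 0 then complex_of_real (1 / (sqrt (a i) * sqrt (a j))) * (\<Sum>b<d. \<Sum>k<M. of_real (l k) * (c i b k * cnj (c j b k))) else 0)"
        by (cases "a i > 0"; cases "a j > 0") (simp_all add: sum_distrib_left)
      finally show ?thesis .
    qed
    have bes: "(\<Sum>i\<in>{..<m}. (cmod (g i (b,k)))\<^sup>2) \<le> 1"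
    proof (rule bessel)
      show "(b,k) \<in> {..<d} \<times> {..<M}" using bk by simp
    next
      fix i j assume "i \<in> {..<m}" "j \<in> {..<m}" "i \<noteq> j"
      then show "(\<Sum>t\<in>{..<d} \<times> {..<M}. g i t * cnj (g j t)) = 0" using gsum G by simp
    next
      fix i assume i: "i \<in> {..<m}"
      show "(\<Sum>t\<in>{..<d} \<times> {..<M}. g i t * cnj (g i t)) = 1 \<or> (\<forall>t\<in>{..<d} \<times> {..<M}. g i t = 0)"
      proof (cases "a i > 0")
        case True
        have "complex_of_real (1 / (sqrt (a i) * sqrt (a i))) * complex_of_real (a i) = complex_of_real ((1 / (sqrt (a i) * sqrt (a i))) * a i)"
          by simp
        also have "(1 / (sqrt (a i) * sqrt (a i))) * a i = 1" using True by simp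
        finally show ?thesis using gsum[of i i] G[of i i] i True by simp
      qed (auto simp: g_def)
    qed auto
    have "(\<Sum>i<m. q i b k / a i) \<le> (\<Sum>i<m. (cmod (g i (b,k)))\<^sup>2)"
    proof (rule sum_mono)
      fix i assume i: "i \<in> {..<m}"
      show "q i b k / a i \<le> (cmod (g i (b,k)))\<^sup>2"
      proof (cases "a i > 0")
        case True
        have lk: "l k \<ge> 0" using lnn bk M_def by simp
        have "cmod (g i (b,k)) = (sqrt (l k) / sqrt (a i)) * cmod (c i b k)"
          using True lk unfolding g_def by (simp add: norm_mult norm_divide)
        then have "(cmod (g i (b,k)))\<^sup>2 = (sqrt (l k) / sqrt (a i))\<^sup>2 * (cmod (c i b k))\<^sup>2"
          by (simp only: power_mult_distrib)
        also have "(sqrt (l k) / sqrt (a i))\<^sup>2 = l k / a i" using True lk by (simp add: power_divide)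
        also have "l k / a i * (cmod (c i b k))\<^sup>2 = q i b k / a i" by (simp add: q_def)
        finally show ?thesis by simp
      next
        case False
        then have "a i = 0" using anonneg i by force
        then show ?thesis unfolding g_def by simp
      qed
    qed
    with bes show ?thesis by simp
  qed
  have lsM: "(\<Sum>k<M. l k) = 1" using ls M_def by simp
  have "(\<Sum>i<m. - (a i * ln (a i))) \<le> (\<Sum>k<M. - (l k * ln (l k))) + ln (real d)"
    by (rule key_real[of m d M q a l], use qn F1 F2 F3 lsM d in auto)
  then show ?thesis using M_def by simp
qed

lemma marg_carrier[simp]: "marg d m k l A \<in> carrier_mat (d^l) (d^l)"
  by (simp add: marg_def)

lemma marg_index: "a < d^l \<Longrightarrow> b < d^l \<Longrightarrow> marg d m k l A $$ (a,b) =
   (\<Sum>x<d^k. \<Sum>y<d^(m-k-l). A $$ (x + d^k*a + d^(k+l)*y, x + d^k*b + d^(k+l)*y))"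
  by (simp add: marg_def)

lemma marg_idx_lt:
  assumes "x < d^k" "a < d^l" "y < d^(m-k-l)" "k + l \<le> m"
  shows "x + d^k*a + d^(k+l)*y < (d::nat)^m"
proof -
  have "x + d^k*a < d^k * d^l" by (rule idx_lt, use assms in auto)
  then have "x + d^k*a < d^(k+l)" by (simp add: power_add)
  then have "x + d^k*a + d^(k+l)*y < d^(k+l) * d^(m-k-l)" by (rule idx_lt, use assms in auto)
  also have "\<dots> = d^m" using assms(4) by (simp flip: power_add)
  finally show ?thesis .
qed

lemma density_herm: "density_op n A \<Longrightarrow> A $$ (i,j) = cnj (A $$ (j,i))" if "i < n" "j < n"
proof -
  assume D: "density_op n A"
  then have A: "A \<in> carrier_mat n n" and h: "adj A = A" unfolding density_op_def mat_adjoint_adj by auto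
  have "adj A $$ (i,j) = cnj (A $$ (j,i))" using A that by simp
  then show ?thesis using h by simp
qed

lemma swap4: "(\<Sum>a\<in>A. \<Sum>b\<in>B. \<Sum>x\<in>X. \<Sum>y\<in>Y. g a b x y) = (\<Sum>x\<in>X. \<Sum>y\<in>Y. \<Sum>a\<in>A. \<Sum>b\<in>B. g a b x y)"
proof -
  have "(\<Sum>a\<in>A. \<Sum>b\<in>B. \<Sum>x\<in>X. \<Sum>y\<in>Y. g a b x y) = (\<Sum>a\<in>A. \<Sum>x\<in>X. \<Sum>y\<in>Y. \<Sum>b\<in>B. g a b x y)"
    by (rule sum.cong[OF refl], rule swap3b)
  also have "\<dots> = (\<Sum>x\<in>X. \<Sum>y\<in>Y. \<Sum>a\<in>A. \<Sum>b\<in>B. g a b x y)" by (rule swap3b)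
  finally show ?thesis .
qed

lemma marg_density:
  assumes D: "density_op (d^m) A" and kl: "k + l \<le> m" and d: "d > 0"
  shows "density_op (d^l) (marg d m k l A)"
proof -
  let ?f = "\<lambda>x a y. x + d^k*a + d^(k+l)*y"
  let ?M = "marg d m k l A"
  have A: "A \<in> carrier_mat (d^m) (d^m)" using D unfolding density_op_def by auto
  obtain Q lam where Q: "Q \<in> carrier_mat (d^m) (d^m)" and QQ: "adj Q * Q = 1\<^sub>m (d^m)"
    and Ad: "A = Q * diag_of (d^m) lam * adj Q" and lnn: "\<forall>k<d^m. lam k \<ge> 0" and ls: "(\<Sum>k<d^m. lam k) = 1"
    using density_spec[OF D] by blast
  have herm: "adj ?M = ?M"
  proof (rule eq_matI)
    fix a b assume "a < dim_row ?M" "b < dim_col ?M"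
    then have ab: "a < d^l" "b < d^l" by (auto simp: marg_def)
    have "adj ?M $$ (a,b) = cnj (?M $$ (b,a))" using ab by (simp add: marg_def)
    also have "\<dots> = ?M $$ (a,b)" using ab
      by (simp add: marg_index cnj_sum, intro sum.cong refl, subst density_herm[OF _ _ D],
          auto intro: marg_idx_lt[OF _ _ _ kl])
    finally show "adj ?M $$ (a,b) = ?M $$ (a,b)" .
  qed (auto simp: marg_def)
  have psd: "0 \<le> Re (conjugate v \<bullet> (?M *\<^sub>v v))" if v: "v \<in> carrier_vec (d^l)" for v
  proof -
    have "conjugate v \<bullet> (?M *\<^sub>v v) = (\<Sum>a<d^l. cnj (v $ a) * (\<Sum>b<d^l. ?M $$ (a,b) * v $ b))"
      using v by (auto simp: scalar_prod_def atLeast0LessThan marg_def intro!: sum.cong)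
    also have "\<dots> = (\<Sum>a<d^l. \<Sum>b<d^l. cnj (v $ a) * v $ b * ?M $$ (a,b))"
      by (simp add: sum_distrib_left mult_ac)
    also have "\<dots> = (\<Sum>a<d^l. \<Sum>b<d^l. \<Sum>x<d^k. \<Sum>y<d^(m-k-l).
        cnj (v $ a) * v $ b * (\<Sum>j<d^m. Q $$ (?f x a y, j) * of_real (lam j) * cnj (Q $$ (?f x b y, j))))"
    proof (intro sum.cong refl)
      fix a b assume ab: "a \<in> {..<d^l}" "b \<in> {..<d^l}"
      have "?M $$ (a,b) = (\<Sum>x<d^k. \<Sum>y<d^(m-k-l). A $$ (?f x a y, ?f x b y))"
        using ab by (simp add: marg_index)
      also have "\<dots> = (\<Sum>x<d^k. \<Sum>y<d^(m-k-l). (\<Sum>j<d^m. Q $$ (?f x a y, j) * of_real (lam j) * cnj (Q $$ (?f x b y, j))))"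
        using ab unfolding Ad by (intro sum.cong refl, subst QDQ_entry[OF Q], auto intro: marg_idx_lt[OF _ _ _ kl])
      finally show "cnj (v $ a) * v $ b * ?M $$ (a,b) = (\<Sum>x<d^k. \<Sum>y<d^(m-k-l).
        cnj (v $ a) * v $ b * (\<Sum>j<d^m. Q $$ (?f x a y, j) * of_real (lam j) * cnj (Q $$ (?f x b y, j))))"
        by (simp add: sum_distrib_left)
    qed
    also have "\<dots> = (\<Sum>x<d^k. \<Sum>y<d^(m-k-l). \<Sum>a<d^l. \<Sum>b<d^l.
        cnj (v $ a) * v $ b * (\<Sum>j<d^m. Q $$ (?f x a y, j) * of_real (lam j) * cnj (Q $$ (?f x b y, j))))"
      by (rule swap4)
    also have "\<dots> = (\<Sum>x<d^k. \<Sum>y<d^(m-k-l). \<Sum>j<d^m. of_real (lam j) *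
        ((\<Sum>a<d^l. cnj (v $ a) * Q $$ (?f x a y, j)) * (\<Sum>b<d^l. v $ b * cnj (Q $$ (?f x b y, j)))))"
      by (rule sum.cong[OF refl], rule sum.cong[OF refl], rule step1[symmetric])
    also have "\<dots> = (\<Sum>x<d^k. \<Sum>y<d^(m-k-l). \<Sum>j<d^m. complex_of_real (lam j *
        (cmod (\<Sum>a<d^l. cnj (v $ a) * Q $$ (?f x a y, j)))\<^sup>2))"
      by (rule sum.cong[OF refl], rule sum.cong[OF refl], rule sum.cong[OF refl],
          simp only: of_real_mult complex_norm_square cnj_sum complex_cnj_mult complex_cnj_cnj mult.commute)
    finally have eq: "conjugate v \<bullet> (?M *\<^sub>v v) = complex_of_real (\<Sum>x<d^k. \<Sum>y<d^(m-k-l). \<Sum>j<d^m. lam j *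
        (cmod (\<Sum>a<d^l. cnj (v $ a) * Q $$ (?f x a y, j)))\<^sup>2)" by simp
    have "(\<Sum>x<d^k. \<Sum>y<d^(m-k-l). \<Sum>j<d^m. lam j * (cmod (\<Sum>a<d^l. cnj (v $ a) * Q $$ (?f x a y, j)))\<^sup>2) \<ge> 0"
      using lnn by (intro sum_nonneg, auto)
    then show ?thesis unfolding eq by simp
  qed
  have tr: "(\<Sum>a<d^l. ?M $$ (a,a)) = 1"
  proof -
    have tA: "(\<Sum>s<d^m. A $$ (s,s)) = 1" using D unfolding density_op_def by auto
    have e: "(d::nat)^m = (d^k * d^l) * d^(m-k-l)" using kl by (simp flip: power_add)
    have "(\<Sum>s<d^m. A $$ (s,s)) = (\<Sum>y<d^(m-k-l). \<Sum>z<d^k * d^l. A $$ (z + (d^k*d^l)*y, z + (d^k*d^l)*y))"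
      unfolding e by (rule sum_split)
    also have "\<dots> = (\<Sum>y<d^(m-k-l). \<Sum>a<d^l. \<Sum>x<d^k. A $$ (?f x a y, ?f x a y))"
      by (rule sum.cong[OF refl], subst sum_split, simp add: power_add mult_ac)
    also have "\<dots> = (\<Sum>a<d^l. \<Sum>x<d^k. \<Sum>y<d^(m-k-l). A $$ (?f x a y, ?f x a y))"
      by (rule swap3b)
    also have "\<dots> = (\<Sum>a<d^l. ?M $$ (a,a))" by (simp add: marg_index)
    finally show ?thesis using tA by simp
  qed
  show ?thesis unfolding density_op_def mat_adjoint_adj using herm psd tr by auto
qed

lemma marg_full: "A \<in> carrier_mat (d^m) (d^m) \<Longrightarrow> marg d m 0 m A = A"
  by (rule eq_matI, auto simp: marg_def)

lemma ptr_marg: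
  assumes pM: "p + 1 \<le> M" and d: "d > 0"
  shows "ptr (d^p) d (marg d M 0 (p+1) A) = marg d M 0 p A"
proof (rule eq_matI)
  fix a b assume "a < dim_row (marg d M 0 p A)" "b < dim_col (marg d M 0 p A)"
  then have ab: "a < d^p" "b < d^p" by (auto simp: marg_def)
  have lt: "x + d^p * c < d^(p+1)" if "x < d^p" "c < d" for x c
    using idx_lt[OF that] by (simp add: mult.commute)
  have "ptr (d^p) d (marg d M 0 (p+1) A) $$ (a,b) = (\<Sum>c<d. marg d M 0 (p+1) A $$ (a + d^p * c, b + d^p * c))"
    using ab by (simp add: ptr_def)
  also have "\<dots> = (\<Sum>c<d. \<Sum>y<d^(M-(p+1)). A $$ (a + d^p * c + d^(p+1) * y, b + d^p * c + d^(p+1) * y))"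
    using ab lt by (intro sum.cong refl, subst marg_index, auto)
  also have "\<dots> = (\<Sum>y<d^(M-(p+1)). \<Sum>c<d. A $$ (a + d^p * c + d^(p+1) * y, b + d^p * c + d^(p+1) * y))"
    by (rule sum.swap)
  also have "\<dots> = (\<Sum>z<d * d^(M-(p+1)). A $$ (a + d^p * z, b + d^p * z))"
    by (subst sum_split, simp add: algebra_simps)
  also have "d * d^(M-(p+1)) = d^(M-p)"
  proof -
    have "M - p = Suc (M - (p+1))" using pM by simp
    then show ?thesis by simp
  qed
  also have "(\<Sum>z<d^(M-p). A $$ (a + d^p * z, b + d^p * z)) = marg d M 0 p A $$ (a,b)"
    using ab by (simp add: marg_index)
  finally show "ptr (d^p) d (marg d M 0 (p+1) A) $$ (a,b) = marg d M 0 p A $$ (a,b)" .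
qed (auto simp: ptr_def marg_def)

lemma marg_comp:
  assumes kl: "k + l \<le> M"
  shows "marg d M k l A = marg d (k+l) k l (marg d M 0 (k+l) A)"
proof (rule eq_matI)
  fix a b assume "a < dim_row (marg d (k+l) k l (marg d M 0 (k+l) A))" "b < dim_col (marg d (k+l) k l (marg d M 0 (k+l) A))"
  then have ab: "a < d^l" "b < d^l" by (auto simp: marg_def)
  have lt: "x + d^k * a < d^(k+l)" if "x < d^k" "a < d^l" for x a
    using idx_lt[OF that] by (simp add: power_add)
  have "marg d (k+l) k l (marg d M 0 (k+l) A) $$ (a,b) = (\<Sum>x<d^k. marg d M 0 (k+l) A $$ (x + d^k * a, x + d^k * b))"
    using ab by (simp add: marg_index)
  also have "\<dots> = (\<Sum>x<d^k. \<Sum>y<d^(M-k-l). A $$ (x + d^k * a + d^(k+l) * y, x + d^k * b + d^(k+l) * y))"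
    using ab lt by (intro sum.cong refl, subst marg_index, auto simp: add_ac)
  also have "\<dots> = marg d M k l A $$ (a,b)" using ab by (simp add: marg_index)
  finally show "marg d M k l A $$ (a,b) = marg d (k+l) k l (marg d M 0 (k+l) A) $$ (a,b)" by simp
qed (auto simp: marg_def)

lemma tensor_entropy:
  assumes D: "density_op (d^p) B" and d: "d > 0"
  shows "vn_entropy (tensor_maxmixed d p B) = vn_entropy B + ln (real d)"
proof -
  define P where "P = d^p"
  define N where "N = d^(p+1)"
  have NP: "N = P * d" unfolding N_def P_def by simp
  have P0: "P > 0" unfolding P_def using d by simp
  obtain F bet where F: "F \<in> carrier_mat P P" and FF: "adj F * F = 1\<^sub>m P"
    and Bd: "B = F * diag_of P bet * adj F" and bnn: "\<forall>k<P. bet k \<ge> 0" and bs: "(\<Sum>k<P. bet k) = 1"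
    using density_spec[OF D] unfolding P_def by blast
  define Q where "Q = mat N N (\<lambda>(s,t). if s div P = t div P then F $$ (s mod P, t mod P) else 0)"
  define lam where "lam t = bet (t mod P) / real d" for t
  have Q: "Q \<in> carrier_mat N N" by (simp add: Q_def)
  have Qe: "Q $$ (x + P * b, t) = (if b = t div P then F $$ (x, t mod P) else 0)" if "x < P" "b < d" "t < N" for x b t
    using that idx_lt[of x P b d] P0 NP by (simp add: Q_def)
  have Qe2: "Q $$ (s, x + P * b) = (if s div P = b then F $$ (s mod P, x) else 0)" if "x < P" "b < d" "s < N" for x b s
    using that idx_lt[of x P b d] P0 NP by (simp add: Q_def)
  have dm: "t div P < d" if "t < N" for t
    using that NP P0 by (simp add: less_mult_imp_div_less mult.commute)
  have QQ: "adj Q * Q = 1\<^sub>m N"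
  proof (rule eq_matI)
    fix t t' assume "t < dim_row (1\<^sub>m N)" "t' < dim_col (1\<^sub>m N)"
    then have tt: "t < N" "t' < N" by auto
    have "(adj Q * Q) $$ (t,t') = (\<Sum>s<N. cnj (Q $$ (s,t)) * Q $$ (s,t'))"
      using tt Q by (subst mult_entry[of _ N N _ N], auto)
    also have "\<dots> = (\<Sum>b<d. \<Sum>x<P. cnj (Q $$ (x + P*b,t)) * Q $$ (x + P*b,t'))"
      unfolding NP by (rule sum_split)
    also have "\<dots> = (\<Sum>b<d. if b = t div P \<and> b = t' div P then (\<Sum>x<P. cnj (F $$ (x, t mod P)) * F $$ (x, t' mod P)) else 0)"
      using tt by (intro sum.cong refl, auto simp: Qe)
    also have "\<dots> = (if t div P = t' div P then (\<Sum>x<P. cnj (F $$ (x, t mod P)) * F $$ (x, t' mod P)) else 0)"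
      using dm[OF tt(1)] by (cases "t div P = t' div P") (auto simp: sum.delta intro!: sum.neutral)
    also have "\<dots> = 1\<^sub>m N $$ (t,t')"
      using unitary_cols[OF F FF, of "t mod P" "t' mod P"] P0 tt
      by (auto, metis div_mult_mod_eq)
    finally show "(adj Q * Q) $$ (t,t') = 1\<^sub>m N $$ (t,t')" .
  qed (use Q in auto)
  have Td: "tensor_maxmixed d p B = Q * diag_of N lam * adj Q"
  proof (rule eq_matI)
    fix s s' assume "s < dim_row (Q * diag_of N lam * adj Q)" "s' < dim_col (Q * diag_of N lam * adj Q)"
    then have ss: "s < N" "s' < N" using Q by auto
    have "(Q * diag_of N lam * adj Q) $$ (s,s') = (\<Sum>t<N. Q $$ (s,t) * of_real (lam t) * cnj (Q $$ (s',t)))"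
      by (rule QDQ_entry[OF Q ss])
    also have "\<dots> = (\<Sum>b<d. \<Sum>x<P. Q $$ (s,x + P*b) * of_real (lam (x + P*b)) * cnj (Q $$ (s',x + P*b)))"
      unfolding NP by (rule sum_split)
    also have "\<dots> = (\<Sum>b<d. if s div P = b \<and> s' div P = b then (\<Sum>x<P. F $$ (s mod P, x) * of_real (bet x) * cnj (F $$ (s' mod P, x))) / of_nat d else 0)"
      using ss by (intro sum.cong refl, auto simp: Qe2 lam_def sum_divide_distrib)
    also have "\<dots> = (if s div P = s' div P then (\<Sum>x<P. F $$ (s mod P, x) * of_real (bet x) * cnj (F $$ (s' mod P, x))) / of_nat d else 0)"
      using dm[OF ss(1)] by (cases "s div P = s' div P") (auto simp: sum.delta intro!: sum.neutral)
    also have "\<dots> = (if s div P = s' div P then B $$ (s mod P, s' mod P) / of_nat d else 0)"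
      using P0 unfolding Bd by (subst QDQ_entry[OF F], auto)
    also have "\<dots> = tensor_maxmixed d p B $$ (s,s')"
      using ss unfolding tensor_maxmixed_def N_def P_def by simp
    finally show "tensor_maxmixed d p B $$ (s,s') = (Q * diag_of N lam * adj Q) $$ (s,s')" by simp
  qed (use Q in \<open>auto simp: tensor_maxmixed_def N_def\<close>)
  have "vn_entropy (tensor_maxmixed d p B) = (\<Sum>t<N. - (lam t * ln (lam t)))"
    by (rule vn_entropy_decomp[OF Q QQ Td])
  also have "\<dots> = (\<Sum>b<d. \<Sum>x<P. - (lam (x + P*b) * ln (lam (x + P*b))))"
    unfolding NP by (rule sum_split)
  also have "\<dots> = (\<Sum>b<d. \<Sum>x<P. - (bet x * ln (bet x)) / real d + bet x * ln (real d) / real d)"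
  proof (intro sum.cong refl)
    fix b x assume "b \<in> {..<d}" "x \<in> {..<P}"
    then have x: "x < P" by simp
    have lx: "lam (x + P*b) = bet x / real d" using x by (simp add: lam_def)
    show "- (lam (x + P*b) * ln (lam (x + P*b))) = - (bet x * ln (bet x)) / real d + bet x * ln (real d) / real d"
    proof (cases "bet x = 0")
      case False
      then have "bet x > 0" using bnn x by force
      then show ?thesis unfolding lx using d by (simp add: ln_div field_simps)
    qed (simp add: lx)
  qed
  also have "\<dots> = real d * (\<Sum>x<P. - (bet x * ln (bet x)) / real d + bet x * ln (real d) / real d)"
    by simp
  also have "\<dots> = (\<Sum>x<P. - (bet x * ln (bet x)) + bet x * ln (real d))"
    unfolding sum_distrib_left using d by (intro sum.cong refl, simp add: field_simps)
  also have "\<dots> = (\<Sum>x<P. - (bet x * ln (bet x))) + ln (real d) * (\<Sum>x<P. bet x)"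
    by (simp only: sum.distrib sum_distrib_left mult.commute)
  also have "(\<Sum>x<P. - (bet x * ln (bet x))) = vn_entropy B"
    by (rule vn_entropy_decomp[OF F FF Bd, symmetric])
  finally show ?thesis using bs by simp
qed

lemma ptr_herm:
  assumes D: "density_op (m*d) R"
  shows "adj (ptr m d R) = ptr m d R"
proof (rule eq_matI)
  fix x x' assume "x < dim_row (ptr m d R)" "x' < dim_col (ptr m d R)"
  then have xx: "x < m" "x' < m" by (auto simp: ptr_def)
  have "adj (ptr m d R) $$ (x,x') = cnj (\<Sum>b<d. R $$ (x' + m*b, x + m*b))" using xx by (simp add: ptr_def)
  also have "\<dots> = (\<Sum>b<d. R $$ (x + m*b, x' + m*b))"
    unfolding cnj_sum by (intro sum.cong refl, subst density_herm[OF _ _ D], auto intro: idx_lt xx)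
  also have "\<dots> = ptr m d R $$ (x,x')" using xx by (simp add: ptr_def)
  finally show "adj (ptr m d R) $$ (x,x') = ptr m d R $$ (x,x')" .
qed (auto simp: ptr_def)

lemma key_density:
  assumes D: "density_op (m*d) R" and d: "d > 0"
  shows "vn_entropy (ptr m d R) \<le> vn_entropy R + ln (real d)"
proof -
  obtain Q l where Q: "Q \<in> carrier_mat (m*d) (m*d)" and QQ: "adj Q * Q = 1\<^sub>m (m*d)"
    and Rd: "R = Q * diag_of (m*d) l * adj Q" and lnn: "\<forall>k<m*d. l k \<ge> 0" and ls: "(\<Sum>k<m*d. l k) = 1"
    using density_spec[OF D] by blast
  have PA: "ptr m d R \<in> carrier_mat m m" by (simp add: ptr_def)
  obtain F a where F: "F \<in> carrier_mat m m" and FF: "adj F * F = 1\<^sub>m m"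
    and Ad: "ptr m d R = F * diag_of m a * adj F"
    using spectral[OF PA ptr_herm[OF D]] by blast
  have "(\<Sum>i<m. - (a i * ln (a i))) \<le> (\<Sum>k<m*d. - (l k * ln (l k))) + ln (real d)"
    by (rule key_quantum[OF Q QQ Rd _ ls F FF Ad d], use lnn in auto)
  then show ?thesis
    unfolding vn_entropy_decomp[OF Q QQ Rd] vn_entropy_decomp[OF F FF Ad] .
qed

lemma entropy_le_ln:
  assumes D: "density_op N X" and N: "N > 0"
  shows "vn_entropy X \<le> ln (real N)"
proof -
  obtain Q l where Q: "Q \<in> carrier_mat N N" and QQ: "adj Q * Q = 1\<^sub>m N"
    and Xd: "X = Q * diag_of N l * adj Q" and lnn: "\<forall>k<N. l k \<ge> 0" and ls: "(\<Sum>k<N. l k) = 1"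
    using density_spec[OF D] by blast
  show ?thesis unfolding vn_entropy_decomp[OF Q QQ Xd]
    by (rule ent_le_ln, use lnn ls N in auto)
qed

lemma upper_bound:
  assumes n: "n \<ge> 1" and d: "d \<ge> 2" and PT: "process_tensor d n U"
  shows "non_markovianity d n U \<le> 2 * (real n - 1) * ln (real d)"
proof -
  have d0: "d > 0" using d by simp
  have DU: "density_op (d^(2*n)) U" and cond: "\<And>j. j \<in> {1..n} \<Longrightarrow> marg d (2 * n) 0 (2 * j - 1) U
                     = tensor_maxmixed d (2 * j - 2) (marg d (2 * n) 0 (2 * j - 2) U)"
    using PT unfolding process_tensor_def by auto
  define Y where "Y j = marg d (2*n) 0 (2*j) U" for j
  have DY: "density_op (d^(2*j)) (Y j)" if "j \<le> n" for j
    unfolding Y_def by (rule marg_density[OF DU _ d0], use that in simp)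
  have mono: "vn_entropy (Y 1) \<le> vn_entropy (Y j)" if "1 \<le> j" "j \<le> n" for j
    using that
  proof (induction j rule: dec_induct)
    case base then show ?case by simp
  next
    case (step j)
    have j1: "j + 1 \<le> n" using step by simp
    have c: "marg d (2*n) 0 (2*j+1) U = tensor_maxmixed d (2*j) (Y j)"
      using cond[of "j+1"] j1 unfolding Y_def by simp
    have p: "ptr (d^(2*j+1)) d (Y (j+1)) = marg d (2*n) 0 (2*j+1) U"
      unfolding Y_def using ptr_marg[of "2*j+1" "2*n" d U] j1 d0 by simp
    have DY1: "density_op (d^(2*j+1) * d) (Y (j+1))"
      using DY[OF j1] by (simp add: power_Suc2 mult.commute)
    have "vn_entropy (ptr (d^(2*j+1)) d (Y (j+1))) \<le> vn_entropy (Y (j+1)) + ln (real d)"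
      by (rule key_density[OF DY1 d0])
    moreover have "vn_entropy (tensor_maxmixed d (2*j) (Y j)) = vn_entropy (Y j) + ln (real d)"
      by (rule tensor_entropy[OF DY d0], use j1 in simp)
    ultimately have "vn_entropy (Y j) \<le> vn_entropy (Y (j+1))" unfolding p c by simp
    then show ?case using step by simp
  qed
  have Yn: "Y n = U" unfolding Y_def
    by (rule marg_full, use DU in \<open>auto simp: density_op_def\<close>)
  have S1: "vn_entropy (marg d (2*n) (2*1-2) 2 U) = vn_entropy (Y 1)" unfolding Y_def by simp
  have Sj: "vn_entropy (marg d (2*n) (2*j-2) 2 U) \<le> 2 * ln (real d)" if "j \<in> {1..n}" for j
  proof -
    have "density_op (d^2) (marg d (2*n) (2*j-2) 2 U)"
      by (rule marg_density[OF DU _ d0], use that in auto)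
    then have "vn_entropy (marg d (2*n) (2*j-2) 2 U) \<le> ln (real (d^2))"
      by (rule entropy_le_ln, use d0 in simp)
    also have "ln (real (d^2)) = 2 * ln (real d)" using d0 by (simp add: ln_realpow)
    finally show ?thesis .
  qed
  have split: "(\<Sum>j = 1..n. vn_entropy (marg d (2*n) (2*j-2) 2 U))
      = vn_entropy (marg d (2*n) (2*1-2) 2 U) + (\<Sum>j = 2..n. vn_entropy (marg d (2*n) (2*j-2) 2 U))"
  proof -
    have "{1..n} = insert 1 {2..n}" using n by auto
    then show ?thesis by simp
  qed
  have "(\<Sum>j = 2..n. vn_entropy (marg d (2*n) (2*j-2) 2 U)) \<le> (\<Sum>j = 2..n. 2 * ln (real d))"
    by (rule sum_mono, rule Sj, auto)
  also have "\<dots> = 2 * (real n - 1) * ln (real d)" using n by (simp add: of_nat_diff)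
  finally have rest: "(\<Sum>j = 2..n. vn_entropy (marg d (2*n) (2*j-2) 2 U)) \<le> 2 * (real n - 1) * ln (real d)" .
  have "vn_entropy (Y 1) \<le> vn_entropy U" using mono[of n] n Yn by simp
  then show ?thesis unfolding non_markovianity_def split S1 using rest by simp
qed

definition ti :: "nat \<Rightarrow> nat \<Rightarrow> nat \<Rightarrow> nat" where
  "ti d N s = s div d^(2*N-2) mod d"

definition yz :: "nat \<Rightarrow> nat \<Rightarrow> nat" where
  "yz d s = s div d mod d"

fun Lk :: "nat \<Rightarrow> nat \<Rightarrow> nat \<Rightarrow> bool" where
  "Lk d 0 s = True"
| "Lk d (Suc N) s = (if N = 0 then True else
     Lk d N (s mod d^(2*N)) \<and> ti d N (s mod d^(2*N)) = s div d^(2*N) div d)"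

lemma Lk1[simp]: "Lk d 1 s = True"
  by (simp add: One_nat_def)

lemma sum_ind1: "(\<Sum>x<d. if x = \<beta> then c else (0::real)) = (if \<beta> < (d::nat) then c else 0)"
  by (simp add: sum.delta)

lemma sum_ind2: "\<alpha> < d \<Longrightarrow> \<beta> < d \<Longrightarrow> (\<Sum>y<d. \<Sum>x<(d::nat). if y = \<alpha> \<and> x = \<beta> then 1 else (0::real)) = 1"
proof -
  assume a: "\<alpha> < d" and b: "\<beta> < d"
  have "(\<Sum>y<d. \<Sum>x<(d::nat). if y = \<alpha> \<and> x = \<beta> then 1 else (0::real)) = (\<Sum>y<d. if y = \<alpha> then 1 else (0::real))"
  proof (rule sum.cong[OF refl])
    fix y show "(\<Sum>x<(d::nat). if y = \<alpha> \<and> x = \<beta> then 1 else (0::real)) = (if y = \<alpha> then 1 else (0::real))"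
      using b by (cases "y = \<alpha>") (simp_all add: sum_ind1)
  qed
  also have "\<dots> = 1" using a by (simp add: sum_ind1)
  finally show ?thesis .
qed

lemma dec_div:
  assumes "s' < D" "x < d" "(d::nat) > 0"
  shows "(s' + D*(x + d*y)) mod D = s'" "(s' + D*(x + d*y)) div D = x + d*y"
    "(x + d*y) mod d = x" "(x + d*y) div d = y"
  using assms by auto

lemma dec_L:
  assumes N: "N \<ge> 1" and s: "s' < d^(2*N)" and x: "x < d" and d: "d > 0"
  shows "Lk d (Suc N) (s' + d^(2*N)*(x + d*y)) = (Lk d N s' \<and> ti d N s' = y)"
  using N s x d by (cases N, auto)

lemma dec_ti:
  assumes N: "N \<ge> 1" and s: "s' < d^(2*N)" and x: "x < d" and d: "d > 0"
  shows "ti d (Suc N) (s' + d^(2*N)*(x + d*y)) = x"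
  using s x d by (simp add: ti_def)

lemma dec_yz:
  assumes N: "N \<ge> 1" and s: "s' < d^(2*N)" and d: "d > 0"
  shows "yz d (s' + d^(2*N)*z) = yz d s'"
proof -
  have e: "d^(2*N) = d * (d * d^(2*N-2))" using N
  proof -
    have "2*N = Suc (Suc (2*N-2))" using N by simp
    then show ?thesis by (metis power_Suc)
  qed
  have "(s' + d^(2*N)*z) div d = s' div d + d * (d^(2*N-2) * z)"
    unfolding e using d by (simp add: mult.assoc)
  then show ?thesis unfolding yz_def by simp
qed

lemma cnt:
  assumes N: "N \<ge> 1" and d: "d > 0" and al: "\<alpha> < d" and be: "\<beta> < d"
  shows "(\<Sum>r<d^(2*N). if Lk d N r \<and> yz d r = \<alpha> \<and> ti d N r = \<beta> then 1 else (0::real)) = real d^(N-1)"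
  using N al be
proof (induction N arbitrary: \<beta> rule: dec_induct)
  case base
  have "(\<Sum>r<d^(2*1). if Lk d 1 r \<and> yz d r = \<alpha> \<and> ti d 1 r = \<beta> then 1 else (0::real))
      = (\<Sum>y<d. \<Sum>x<d. if yz d (x + d*y) = \<alpha> \<and> ti d 1 (x + d*y) = \<beta> then 1 else (0::real))"
  proof -
    have "(d::nat)^(2*1) = d * d" by (simp add: power2_eq_square)
    then show ?thesis by (simp only: sum_split Lk1 simp_thms)
  qed
  also have "\<dots> = (\<Sum>y<d. \<Sum>x<d. if y = \<alpha> \<and> x = \<beta> then 1 else (0::real))"
    using d by (intro sum.cong refl, auto simp: yz_def ti_def)
  also have "\<dots> = 1" using base by (simp add: sum_ind2)
  finally show ?case by simp
next
  case (step N)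
  let ?D = "d^(2*N)"
  have e: "d^(2*Suc N) = ?D * (d * d)" by (simp add: power_add mult_ac)
  have "(\<Sum>r<d^(2*Suc N). if Lk d (Suc N) r \<and> yz d r = \<alpha> \<and> ti d (Suc N) r = \<beta> then 1 else (0::real))
      = (\<Sum>z<d*d. \<Sum>s<?D. if Lk d (Suc N) (s + ?D*z) \<and> yz d (s + ?D*z) = \<alpha> \<and> ti d (Suc N) (s + ?D*z) = \<beta> then 1 else (0::real))"
    unfolding e by (rule sum_split)
  also have "\<dots> = (\<Sum>y<d. \<Sum>x<d. \<Sum>s<?D. if Lk d (Suc N) (s + ?D*(x + d*y)) \<and> yz d (s + ?D*(x + d*y)) = \<alpha> \<and> ti d (Suc N) (s + ?D*(x + d*y)) = \<beta> then 1 else (0::real))"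
    by (rule sum_split)
  also have "\<dots> = (\<Sum>y<d. \<Sum>x<d. \<Sum>s<?D. if x = \<beta> then (if Lk d N s \<and> yz d s = \<alpha> \<and> ti d N s = y then 1 else 0) else (0::real))"
    using step.hyps d by (intro sum.cong refl, auto simp: dec_L dec_ti dec_yz)
  also have "\<dots> = (\<Sum>y<d. \<Sum>s<?D. if Lk d N s \<and> yz d s = \<alpha> \<and> ti d N s = y then 1 else (0::real))"
  proof (rule sum.cong[OF refl])
    fix y
    have "(\<Sum>x<d. \<Sum>s<?D. if x = \<beta> then (if Lk d N s \<and> yz d s = \<alpha> \<and> ti d N s = y then 1 else 0) else (0::real))
        = (\<Sum>x<d. if x = \<beta> then (\<Sum>s<?D. if Lk d N s \<and> yz d s = \<alpha> \<and> ti d N s = y then 1 else (0::real)) else 0)"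
      by (rule sum.cong[OF refl], auto)
    also have "\<dots> = (\<Sum>s<?D. if Lk d N s \<and> yz d s = \<alpha> \<and> ti d N s = y then 1 else (0::real))"
      using step.prems by (simp add: sum_ind1)
    finally show "(\<Sum>x<d. \<Sum>s<?D. if x = \<beta> then (if Lk d N s \<and> yz d s = \<alpha> \<and> ti d N s = y then 1 else 0) else (0::real))
        = (\<Sum>s<?D. if Lk d N s \<and> yz d s = \<alpha> \<and> ti d N s = y then 1 else (0::real))" .
  qed
  also have "\<dots> = (\<Sum>y<d. real d^(N-1))"
    using step.IH step.prems by (intro sum.cong refl, auto)
  also have "\<dots> = real d^(Suc N - 1)" using step.hyps by (cases N, auto)
  finally show ?case .
qed

definition ue :: "nat \<Rightarrow> nat \<Rightarrow> nat \<Rightarrow> nat \<Rightarrow> real" where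
  "ue d N s t = (if Lk d N s \<and> Lk d N t \<and> yz d s = yz d t \<and> ti d N s = ti d N t then 1 / real d^(N+1) else 0)"

lemma ue_sym: "ue d N s t = ue d N t s"
  unfolding ue_def by auto

lemma yz_lt: "d > 0 \<Longrightarrow> yz d s < d" by (simp add: yz_def)
lemma ti_lt: "d > 0 \<Longrightarrow> ti d N s < d" by (simp add: ti_def)

lemma ue_sq:
  assumes N: "N \<ge> 1" and d: "d > 0"
  shows "(\<Sum>r<d^(2*N). ue d N s r * ue d N r t) = ue d N s t / real d^2"
proof -
  let ?A = "Lk d N s \<and> Lk d N t \<and> yz d s = yz d t \<and> ti d N s = ti d N t"
  let ?c = "1 / real d^(N+1)"
  have "(\<Sum>r<d^(2*N). ue d N s r * ue d N r t)
      = (\<Sum>r<d^(2*N). (if ?A then ?c * ?c else 0) * (if Lk d N r \<and> yz d r = yz d s \<and> ti d N r = ti d N s then 1 else 0))"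
    by (intro sum.cong refl, auto simp: ue_def)
  also have "\<dots> = (if ?A then ?c * ?c else 0) * (\<Sum>r<d^(2*N). if Lk d N r \<and> yz d r = yz d s \<and> ti d N r = ti d N s then 1 else 0)"
    by (simp add: sum_distrib_left)
  also have "\<dots> = (if ?A then ?c * ?c else 0) * real d^(N-1)"
    using cnt[OF N d yz_lt[OF d] ti_lt[OF d]] by simp
  also have "\<dots> = ue d N s t / real d^2"
  proof -
    have "real d^(N-1) * real d^2 = real d^(N+1)" using N by (simp flip: power_add)
    then have "?c * ?c * real d^(N-1) = ?c / real d^2" using d by (simp add: field_simps)
    then show ?thesis unfolding ue_def by simp
  qed
  finally show ?thesis .
qed

lemma ind_split: "a < d \<Longrightarrow> b < d \<Longrightarrow> (if P then 1 else (0::real)) = (\<Sum>\<alpha><(d::nat). \<Sum>\<beta><d. if P \<and> a = \<alpha> \<and> b = \<beta> then 1 else 0)"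
proof -
  assume a: "a < d" and b: "b < d"
  show ?thesis
  proof (cases P)
    case True
    have "(\<Sum>\<alpha><(d::nat). \<Sum>\<beta><d. if P \<and> a = \<alpha> \<and> b = \<beta> then 1 else (0::real)) = (\<Sum>\<alpha><(d::nat). \<Sum>\<beta><d. if \<alpha> = a \<and> \<beta> = b then 1 else (0::real))"
      using True by (intro sum.cong refl, auto)
    then show ?thesis using sum_ind2[OF a b] True by simp
  qed simp
qed

lemma ue_tr:
  assumes N: "N \<ge> 1" and d: "d > 0"
  shows "(\<Sum>s<d^(2*N). ue d N s s) = 1"
proof -
  have "(\<Sum>s<d^(2*N). ue d N s s) = (1 / real d^(N+1)) * (\<Sum>s<d^(2*N). if Lk d N s then 1 else 0)"
    by (simp add: ue_def sum_distrib_left if_distrib cong: if_cong)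
  also have "(\<Sum>s<d^(2*N). if Lk d N s then 1 else (0::real)) = (\<Sum>s<d^(2*N). \<Sum>\<alpha><d. \<Sum>\<beta><d. if Lk d N s \<and> yz d s = \<alpha> \<and> ti d N s = \<beta> then 1 else 0)"
    by (intro sum.cong refl, rule ind_split[OF yz_lt[OF d] ti_lt[OF d]])
  also have "\<dots> = (\<Sum>\<alpha><d. \<Sum>\<beta><d. \<Sum>s<d^(2*N). if Lk d N s \<and> yz d s = \<alpha> \<and> ti d N s = \<beta> then 1 else (0::real))"
    by (rule swap3b)
  also have "\<dots> = (\<Sum>\<alpha><d. \<Sum>\<beta><d. real d^(N-1))"
    using cnt[OF N d] by simp
  also have "(1 / real d^(N+1)) * \<dots> = 1"
  proof -
    have "real d * real d * real d^(N-1) = real d^(N+1)" using N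
      by (simp add: power2_eq_square[symmetric] flip: power_add)
    then show ?thesis using d by simp
  qed
  finally show ?thesis .
qed

lemma ue_dec:
  assumes N: "N \<ge> 1" and d: "d > 0" and s: "s < d^(2*N)" and t: "t < d^(2*N)" and xa: "xa < d" and xb: "xb < d"
  shows "ue d (Suc N) (s + d^(2*N)*(xa + d*ya)) (t + d^(2*N)*(xb + d*yb)) =
    (if Lk d N s \<and> ti d N s = ya \<and> Lk d N t \<and> ti d N t = yb \<and> yz d s = yz d t \<and> xa = xb then 1 / real d^(N+2) else 0)"
  unfolding ue_def using assms by (simp add: dec_L dec_ti dec_yz)

lemma ue_E1:
  assumes N: "N \<ge> 1" and d: "d > 0" and s: "s < d^(2*N)" and t: "t < d^(2*N)"
  shows "(\<Sum>z<d*d. ue d (Suc N) (s + d^(2*N)*z) (t + d^(2*N)*z)) = ue d N s t"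
proof -
  let ?A = "Lk d N s \<and> Lk d N t \<and> yz d s = yz d t \<and> ti d N s = ti d N t"
  have "(\<Sum>z<d*d. ue d (Suc N) (s + d^(2*N)*z) (t + d^(2*N)*z))
      = (\<Sum>y<d. \<Sum>x<d. ue d (Suc N) (s + d^(2*N)*(x + d*y)) (t + d^(2*N)*(x + d*y)))"
    by (rule sum_split)
  also have "\<dots> = (\<Sum>y<d. \<Sum>x<d. if ?A then (if y = ti d N s then 1 / real d^(N+2) else 0) else 0)"
    using assms by (intro sum.cong refl, subst ue_dec, auto)
  also have "\<dots> = (\<Sum>y<d. if y = ti d N s then (if ?A then real d * (1 / real d^(N+2)) else 0) else 0)"
    by (intro sum.cong refl, auto)
  also have "\<dots> = (if ?A then real d * (1 / real d^(N+2)) else 0)"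
    using ti_lt[OF d] by (simp add: sum_ind1)
  also have "\<dots> = ue d N s t" using d by (simp add: ue_def)
  finally show ?thesis .
qed

lemma ue_E2:
  assumes N: "N \<ge> 1" and d: "d > 0" and s: "s < d^(2*N)" and t: "t < d^(2*N)" and xa: "xa < d" and xb: "xb < d"
  shows "(\<Sum>y<d. ue d (Suc N) (s + d^(2*N)*(xa + d*y)) (t + d^(2*N)*(xb + d*y))) = (if xa = xb then ue d N s t / real d else 0)"
proof -
  let ?A = "Lk d N s \<and> Lk d N t \<and> yz d s = yz d t \<and> ti d N s = ti d N t"
  have "(\<Sum>y<d. ue d (Suc N) (s + d^(2*N)*(xa + d*y)) (t + d^(2*N)*(xb + d*y)))
      = (\<Sum>y<d. if y = ti d N s then (if ?A \<and> xa = xb then 1 / real d^(N+2) else 0) else 0)"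
    using assms by (intro sum.cong refl, subst ue_dec, auto)
  also have "\<dots> = (if ?A \<and> xa = xb then 1 / real d^(N+2) else 0)"
    using ti_lt[OF d] by (simp add: sum_ind1)
  also have "\<dots> = (if xa = xb then ue d N s t / real d else 0)" using d by (simp add: ue_def)
  finally show ?thesis .
qed

lemma ue_pair:
  assumes N: "N \<ge> 1" and d: "d > 0" and a: "a < d*d" and b: "b < d*d"
  shows "(\<Sum>x<d^(2*N). ue d (Suc N) (x + d^(2*N)*a) (x + d^(2*N)*b)) = (if a = b then 1 / real d^2 else 0)"
proof -
  have ad: "a = a mod d + d * (a div d)" "b = b mod d + d * (b div d)" by simp_all
  have adl: "a div d < d" "b div d < d" using a b by (simp_all add: less_mult_imp_div_less)
  have eqab: "(a mod d = b mod d \<and> a div d = b div d) = (a = b)" by (metis ad)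
  have "(\<Sum>x<d^(2*N). ue d (Suc N) (x + d^(2*N)*a) (x + d^(2*N)*b))
      = (\<Sum>x<d^(2*N). ue d (Suc N) (x + d^(2*N)*(a mod d + d * (a div d))) (x + d^(2*N)*(b mod d + d * (b div d))))"
    using ad by simp
  also have "\<dots> = (\<Sum>x<d^(2*N). if a = b then (if Lk d N x \<and> ti d N x = a div d then 1 / real d^(N+2) else 0) else 0)"
    using N d by (intro sum.cong refl, subst ue_dec, auto simp: eqab[symmetric])
  also have "\<dots> = (if a = b then (1 / real d^(N+2)) * (\<Sum>x<d^(2*N). if Lk d N x \<and> ti d N x = a div d then 1 else 0) else 0)"
    by (cases "a = b") (auto simp: sum_distrib_left intro!: sum.cong)
  also have "(\<Sum>x<d^(2*N). if Lk d N x \<and> ti d N x = a div d then 1 else (0::real))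
      = (\<Sum>x<d^(2*N). \<Sum>\<alpha><d. if Lk d N x \<and> yz d x = \<alpha> \<and> ti d N x = a div d then 1 else 0)"
  proof (intro sum.cong refl)
    fix x
    have "(\<Sum>\<alpha><d. if Lk d N x \<and> yz d x = \<alpha> \<and> ti d N x = a div d then 1 else (0::real))
        = (\<Sum>\<alpha><d. if \<alpha> = yz d x then (if Lk d N x \<and> ti d N x = a div d then 1 else 0) else 0)"
      by (intro sum.cong refl, auto)
    also have "\<dots> = (if Lk d N x \<and> ti d N x = a div d then 1 else 0)"
      using yz_lt[OF d] by (simp add: sum_ind1)
    finally show "(if Lk d N x \<and> ti d N x = a div d then 1 else (0::real))
      = (\<Sum>\<alpha><d. if Lk d N x \<and> yz d x = \<alpha> \<and> ti d N x = a div d then 1 else 0)" by simp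
  qed
  also have "\<dots> = (\<Sum>\<alpha><d. \<Sum>x<d^(2*N). if Lk d N x \<and> yz d x = \<alpha> \<and> ti d N x = a div d then 1 else (0::real))"
    by (rule sum.swap)
  also have "\<dots> = (\<Sum>\<alpha><d. real d^(N-1))" using cnt[OF N d _ adl(1)] by simp
  also have "(1 / real d^(N+2)) * (\<Sum>\<alpha><d. real d^(N-1)) = 1 / real d^2"
  proof -
    have "real d * real d^(N-1) * real d^2 = real d^(N+2)" using N
      by (simp flip: power_add power_Suc)
    then show ?thesis using d by (simp add: field_simps)
  qed
  finally show ?thesis .
qed

lemma ue_one:
  assumes d: "d > 0" and a: "a < d*d" and b: "b < d*d"
  shows "ue d 1 a b = (if a = b then 1 / real d^2 else 0)"
proof -
  have ad: "a = a mod d + d * (a div d)" "b = b mod d + d * (b div d)" by simp_all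
  have adl: "a div d < d" "b div d < d" using a b by (simp_all add: less_mult_imp_div_less)
  have eqab: "(a div d = b div d \<and> a mod d = b mod d) = (a = b)" by (metis ad)
  show ?thesis unfolding ue_def yz_def ti_def using adl eqab by (simp add: power2_eq_square)
qed

lemma trace_decomp:
  assumes Q: "Q \<in> carrier_mat n n" and QQ: "adj Q * Q = 1\<^sub>m n" and Ad: "A = Q * diag_of n l * adj Q"
  shows "(\<Sum>i<n. A $$ (i,i)) = complex_of_real (\<Sum>k<n. l k)"
proof -
  have "complex_of_real (\<Sum>k<n. l k) = (\<Sum>k<n. of_real (l k) * (\<Sum>i<n. cnj (Q $$ (i,k)) * Q $$ (i,k)))"
    using unitary_cols[OF Q QQ] by simp
  also have "\<dots> = (\<Sum>i<n. \<Sum>k<n. Q $$ (i,k) * of_real (l k) * cnj (Q $$ (i,k)))"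
    unfolding sum_distrib_left by (subst sum.swap, auto intro!: sum.cong simp: mult.commute mult.left_commute)
  also have "\<dots> = (\<Sum>i<n. A $$ (i,i))"
    unfolding Ad by (intro sum.cong, auto simp: QDQ_entry[OF Q])
  finally show ?thesis by simp
qed

lemma psd_decomp:
  assumes Q: "Q \<in> carrier_mat n n" and Ad: "A = Q * diag_of n l * adj Q" and lnn: "\<And>k. k < n \<Longrightarrow> l k \<ge> 0"
    and v: "v \<in> carrier_vec n"
  shows "0 \<le> Re (conjugate v \<bullet> (A *\<^sub>v v))"
proof -
  have A: "A \<in> carrier_mat n n" unfolding Ad using Q by auto
  have "conjugate v \<bullet> (A *\<^sub>v v) = (\<Sum>i<n. cnj (v $ i) * (\<Sum>j<n. A $$ (i,j) * v $ j))"
    using v A by (auto simp: scalar_prod_def atLeast0LessThan intro!: sum.cong)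
  also have "\<dots> = (\<Sum>i<n. \<Sum>j<n. cnj (v $ i) * v $ j * A $$ (i,j))"
    by (simp add: sum_distrib_left mult_ac)
  also have "\<dots> = (\<Sum>i<n. \<Sum>j<n. cnj (v $ i) * v $ j * (\<Sum>k<n. Q $$ (i,k) * of_real (l k) * cnj (Q $$ (j,k))))"
    by (intro sum.cong refl, simp add: Ad QDQ_entry[OF Q])
  also have "\<dots> = (\<Sum>k<n. of_real (l k) * ((\<Sum>i<n. cnj (v $ i) * Q $$ (i,k)) * (\<Sum>j<n. v $ j * cnj (Q $$ (j,k)))))"
    by (rule step1[symmetric])
  also have "\<dots> = (\<Sum>k<n. complex_of_real (l k * (cmod (\<Sum>i<n. cnj (v $ i) * Q $$ (i,k)))\<^sup>2))"
    by (rule sum.cong[OF refl], simp only: of_real_mult complex_norm_square cnj_sum complex_cnj_mult complex_cnj_cnj mult.commute)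
  finally have eq: "conjugate v \<bullet> (A *\<^sub>v v) = complex_of_real (\<Sum>k<n. l k * (cmod (\<Sum>i<n. cnj (v $ i) * Q $$ (i,k)))\<^sup>2)"
    by simp
  have "(\<Sum>k<n. l k * (cmod (\<Sum>i<n. cnj (v $ i) * Q $$ (i,k)))\<^sup>2) \<ge> 0" using lnn by (intro sum_nonneg, auto)
  then show ?thesis unfolding eq by simp
qed

lemma assoc6:
  assumes "X \<in> carrier_mat n n" "Y \<in> carrier_mat n n" "Z \<in> carrier_mat n n"
  shows "(X * Y * Z) * (X * Y * Z) = X * Y * (Z * X) * Y * Z"
  using assms by (simp add: assoc_mult_mat[of _ n n _ n _ n] mult_carrier_mat)

lemma assoc3s:
  fixes X Y Z :: "complex mat"
  assumes "X \<in> carrier_mat n n" "Y \<in> carrier_mat n n" "Z \<in> carrier_mat n n"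
  shows "X * Y * 1\<^sub>m n * Y * Z = X * (Y * Y) * Z"
proof -
  have "1\<^sub>m n * Y = Y" using assms(2) by (rule left_mult_one_mat)
  then show ?thesis using assms by (simp add: assoc_mult_mat[of _ n n _ n _ n] mult_carrier_mat)
qed

lemma idem_state:
  assumes A: "A \<in> carrier_mat n n" and h: "adj A = A" and sq: "A * A = complex_of_real c \<cdot>\<^sub>m A"
    and c: "c > 0" and tr: "(\<Sum>i<n. A $$ (i,i)) = 1"
  shows "density_op n A \<and> vn_entropy A = - ln c"
proof -
  obtain Q l where Q: "Q \<in> carrier_mat n n" and QQ: "adj Q * Q = 1\<^sub>m n" and Ad: "A = Q * diag_of n l * adj Q"
    using spectral[OF A h] by blast
  have aQ: "adj Q \<in> carrier_mat n n" using Q by simp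
  have QQ': "Q * adj Q = 1\<^sub>m n" by (rule unitary_right[OF Q QQ])
  define D where "D = adj Q * A * Q"
  have DD: "D = diag_of n l" unfolding D_def by (rule conj_diag[OF Q QQ Ad])
  have aQA: "adj Q * A \<in> carrier_mat n n" using aQ A by auto
  have "D * D = adj Q * A * (Q * adj Q) * A * Q"
    unfolding D_def by (rule assoc6[OF aQ A Q])
  also have "\<dots> = adj Q * (A * A) * Q" unfolding QQ' by (rule assoc3s[OF aQ A Q])
  also have "\<dots> = complex_of_real c \<cdot>\<^sub>m D" unfolding sq D_def
    using mult_smult_distrib[OF aQ A] mult_smult_assoc_mat[OF aQA Q] by simp
  finally have DD2: "D * D = complex_of_real c \<cdot>\<^sub>m D" .
  have lk: "l k = 0 \<or> l k = c" if k: "k < n" for k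
  proof -
    have "(D * D) $$ (k,k) = (\<Sum>j<n. D $$ (k,j) * D $$ (j,k))"
      unfolding DD using k by (subst mult_entry[of _ n n _ n], auto)
    also have "\<dots> = (\<Sum>j<n. if j = k then complex_of_real (l k * l k) else 0)"
      unfolding DD using k by (intro sum.cong refl, auto simp: diag_of_def)
    also have "\<dots> = complex_of_real (l k * l k)" using k by (simp add: sum.delta)
    finally have e1: "(D * D) $$ (k,k) = complex_of_real (l k * l k)" .
    have e2: "(D * D) $$ (k,k) = complex_of_real (c * l k)"
      unfolding DD2 using k by (simp add: DD diag_of_def)
    from e1 e2 have "complex_of_real (l k * l k) = complex_of_real (c * l k)" by (simp only:)
    then have "l k * l k = c * l k" by (simp only: of_real_eq_iff)
    then show ?thesis by auto
  qed
  have lnn: "l k \<ge> 0" if "k < n" for k using lk[OF that] c by auto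
  have ls: "(\<Sum>k<n. l k) = 1" using trace_decomp[OF Q QQ Ad] tr by (metis of_real_eq_1_iff)
  have dens: "density_op n A"
    unfolding density_op_def mat_adjoint_adj using A h tr psd_decomp[OF Q Ad lnn] by auto
  have "vn_entropy A = (\<Sum>k<n. - (l k * ln (l k)))" by (rule vn_entropy_decomp[OF Q QQ Ad])
  also have "\<dots> = (\<Sum>k<n. l k * (- ln c))"
    by (intro sum.cong refl, use lk in auto)
  also have "\<dots> = (\<Sum>k<n. l k) * (- ln c)" by (rule sum_distrib_right[symmetric])
  also have "\<dots> = - ln c" using ls by simp
  finally show ?thesis using dens by simp
qed

definition exM :: "nat \<Rightarrow> nat \<Rightarrow> complex mat" where
  "exM d N = mat (d^(2*N)) (d^(2*N)) (\<lambda>(s,t). complex_of_real (ue d N s t))"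

definition PM :: "nat \<Rightarrow> complex mat" where
  "PM d = mat (d^2) (d^2) (\<lambda>(a,b). if a = b then complex_of_real (1 / real d^2) else 0)"

lemma exM_carrier[simp]: "exM d N \<in> carrier_mat (d^(2*N)) (d^(2*N))"
  by (simp add: exM_def)

lemma exM_state:
  assumes N: "N \<ge> 1" and d: "d > 0"
  shows "density_op (d^(2*N)) (exM d N) \<and> vn_entropy (exM d N) = 2 * ln (real d)"
proof -
  let ?U = "exM d N"
  have h: "adj ?U = ?U" by (rule eq_matI, auto simp: exM_def ue_sym)
  have sq: "?U * ?U = complex_of_real (1 / real d^2) \<cdot>\<^sub>m ?U"
  proof (rule eq_matI)
    fix s t assume "s < dim_row (complex_of_real (1 / real d^2) \<cdot>\<^sub>m ?U)" "t < dim_col (complex_of_real (1 / real d^2) \<cdot>\<^sub>m ?U)"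
    then have st: "s < d^(2*N)" "t < d^(2*N)" by (auto simp: exM_def)
    have "(?U * ?U) $$ (s,t) = (\<Sum>r<d^(2*N). ?U $$ (s,r) * ?U $$ (r,t))"
      using st by (subst mult_entry[of _ "d^(2*N)" "d^(2*N)" _ "d^(2*N)"], auto)
    also have "\<dots> = complex_of_real (\<Sum>r<d^(2*N). ue d N s r * ue d N r t)"
      using st by (simp add: exM_def)
    also have "\<dots> = complex_of_real (ue d N s t / real d^2)" using ue_sq[OF N d] by simp
    finally show "(?U * ?U) $$ (s,t) = (complex_of_real (1 / real d^2) \<cdot>\<^sub>m ?U) $$ (s,t)"
      using st by (simp add: exM_def)
  qed (auto simp: exM_def)
  have tr: "(\<Sum>i<d^(2*N). ?U $$ (i,i)) = 1"
  proof -
    have "(\<Sum>i<d^(2*N). ?U $$ (i,i)) = complex_of_real (\<Sum>i<d^(2*N). ue d N i i)"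
      by (simp add: exM_def)
    then show ?thesis using ue_tr[OF N d] by simp
  qed
  have "density_op (d^(2*N)) ?U \<and> vn_entropy ?U = - ln (1 / real d^2)"
    by (rule idem_state[OF exM_carrier h sq _ tr], use d in simp)
  moreover have "- ln (1 / real d^2) = 2 * ln (real d)" using d by (simp add: ln_div ln_realpow)
  ultimately show ?thesis by simp
qed

lemma PM_state:
  assumes d: "d > 0"
  shows "density_op (d^2) (PM d) \<and> vn_entropy (PM d) = 2 * ln (real d)"
proof -
  have C: "PM d \<in> carrier_mat (d^2) (d^2)" by (simp add: PM_def)
  have h: "adj (PM d) = PM d" by (rule eq_matI, auto simp: PM_def)
  have sq: "PM d * PM d = complex_of_real (1 / real d^2) \<cdot>\<^sub>m PM d"
  proof (rule eq_matI)
    fix a b assume "a < dim_row (complex_of_real (1 / real d^2) \<cdot>\<^sub>m PM d)" "b < dim_col (complex_of_real (1 / real d^2) \<cdot>\<^sub>m PM d)"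
    then have ab: "a < d^2" "b < d^2" by (auto simp: PM_def)
    have "(PM d * PM d) $$ (a,b) = (\<Sum>r<d^2. PM d $$ (a,r) * PM d $$ (r,b))"
      using ab C by (subst mult_entry[of _ "d^2" "d^2" _ "d^2"], auto)
    also have "\<dots> = (\<Sum>r<d^2. if r = a then (if a = b then complex_of_real (1 / real d^2) * complex_of_real (1 / real d^2) else 0) else 0)"
      using ab by (intro sum.cong refl, auto simp: PM_def)
    also have "\<dots> = (if a = b then complex_of_real (1 / real d^2) * complex_of_real (1 / real d^2) else 0)"
      using ab by (simp add: sum.delta)
    finally show "(PM d * PM d) $$ (a,b) = (complex_of_real (1 / real d^2) \<cdot>\<^sub>m PM d) $$ (a,b)"
      using ab by (simp add: PM_def)
  qed (auto simp: PM_def)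
  have tr: "(\<Sum>i<d^2. PM d $$ (i,i)) = 1" using d by (simp add: PM_def)
  have "density_op (d^2) (PM d) \<and> vn_entropy (PM d) = - ln (1 / real d^2)"
    by (rule idem_state[OF C h sq _ tr], use d in simp)
  moreover have "- ln (1 / real d^2) = 2 * ln (real d)" using d by (simp add: ln_div ln_realpow)
  ultimately show ?thesis by simp
qed

lemma marg00:
  assumes ab: "a \<le> b" "b \<le> M"
  shows "marg d M 0 a A = marg d b 0 a (marg d M 0 b A)"
proof (rule eq_matI)
  fix s t assume "s < dim_row (marg d b 0 a (marg d M 0 b A))" "t < dim_col (marg d b 0 a (marg d M 0 b A))"
  then have st: "s < d^a" "t < d^a" by (auto simp: marg_def)
  have lt: "s + d^a * y < d^b" if "s < d^a" "y < d^(b-a)" for s y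
  proof -
    have "s + d^a * y < d^a * d^(b-a)" by (rule idx_lt[OF that])
    also have "\<dots> = d^b" using ab by (simp flip: power_add)
    finally show ?thesis .
  qed
  have "marg d b 0 a (marg d M 0 b A) $$ (s,t) = (\<Sum>y<d^(b-a). marg d M 0 b A $$ (s + d^a*y, t + d^a*y))"
    using st by (simp add: marg_index)
  also have "\<dots> = (\<Sum>y<d^(b-a). \<Sum>z<d^(M-b). A $$ (s + d^a*y + d^b*z, t + d^a*y + d^b*z))"
    using st lt by (intro sum.cong refl, subst marg_index, auto)
  also have "\<dots> = (\<Sum>z<d^(M-b). \<Sum>y<d^(b-a). A $$ (s + d^a*y + d^b*z, t + d^a*y + d^b*z))"
    by (rule sum.swap)
  also have "\<dots> = (\<Sum>w<d^(b-a) * d^(M-b). A $$ (s + d^a*w, t + d^a*w))"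
  proof -
    have e: "(d::nat)^a * d^(b-a) = d^b" using ab by (simp flip: power_add)
    show ?thesis by (subst sum_split, simp add: algebra_simps e)
  qed
  also have "d^(b-a) * d^(M-b) = d^(M-a)" using ab by (simp flip: power_add)
  also have "(\<Sum>w<d^(M-a). A $$ (s + d^a*w, t + d^a*w)) = marg d M 0 a A $$ (s,t)"
    using st by (simp add: marg_index)
  finally show "marg d M 0 a A $$ (s,t) = marg d b 0 a (marg d M 0 b A) $$ (s,t)" by simp
qed (auto simp: marg_def)

lemma exM_E1:
  assumes N: "N \<ge> 1" and d: "d > 0"
  shows "marg d (2*Suc N) 0 (2*N) (exM d (Suc N)) = exM d N"
proof (rule eq_matI)
  fix a b assume "a < dim_row (exM d N)" "b < dim_col (exM d N)"
  then have ab: "a < d^(2*N)" "b < d^(2*N)" by (auto simp: exM_def)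
  have lt: "a + d^(2*N) * z < d^(2*Suc N)" if "a < d^(2*N)" "z < d*d" for a z
    using idx_lt[OF that] by (simp add: power_add mult_ac)
  have "marg d (2*Suc N) 0 (2*N) (exM d (Suc N)) $$ (a,b) = (\<Sum>z<d*d. exM d (Suc N) $$ (a + d^(2*N)*z, b + d^(2*N)*z))"
    using ab by (simp add: marg_index power2_eq_square)
  also have "\<dots> = complex_of_real (\<Sum>z<d*d. ue d (Suc N) (a + d^(2*N)*z) (b + d^(2*N)*z))"
    using ab lt by (simp add: exM_def)
  also have "\<dots> = exM d N $$ (a,b)" using ue_E1[OF N d ab] ab by (simp add: exM_def)
  finally show "marg d (2*Suc N) 0 (2*N) (exM d (Suc N)) $$ (a,b) = exM d N $$ (a,b)" .
qed (auto simp: exM_def marg_def)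

lemma exM_marg:
  assumes j: "1 \<le> j" "j \<le> N" and d: "d > 0"
  shows "marg d (2*N) 0 (2*j) (exM d N) = exM d j"
  using j(2)
proof (induction N rule: dec_induct)
  case base then show ?case by (rule marg_full, simp)
next
  case (step N)
  have "marg d (2*Suc N) 0 (2*j) (exM d (Suc N)) = marg d (2*N) 0 (2*j) (marg d (2*Suc N) 0 (2*N) (exM d (Suc N)))"
    by (rule marg00, use step in auto)
  also have "marg d (2*Suc N) 0 (2*N) (exM d (Suc N)) = exM d N"
    by (rule exM_E1, use step j in auto, rule d)
  finally show ?case using step by simp
qed

lemmas ue_one' = ue_one[unfolded One_nat_def]

lemma exM_E2:
  assumes N: "N \<ge> 1" and d: "d > 0"
  shows "marg d (2*Suc N) 0 (2*N+1) (exM d (Suc N)) = tensor_maxmixed d (2*N) (exM d N)"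
proof (rule eq_matI)
  fix a b assume "a < dim_row (tensor_maxmixed d (2*N) (exM d N))" "b < dim_col (tensor_maxmixed d (2*N) (exM d N))"
  then have ab: "a < d^(2*N+1)" "b < d^(2*N+1)" by (auto simp: tensor_maxmixed_def)
  let ?D = "d^(2*N)"
  have D0: "?D > 0" using d by simp
  have ad: "a div ?D < d" "b div ?D < d" using ab by (auto simp: less_mult_imp_div_less mult.commute)
  have am: "a mod ?D < ?D" "b mod ?D < ?D" using D0 by auto
  have ex: "a + d^(2*N+1) * y = a mod ?D + ?D * (a div ?D + d * y)" "b + d^(2*N+1) * y = b mod ?D + ?D * (b div ?D + d * y)" for y
    by (simp_all add: algebra_simps)
  have lt: "x + d^(2*N+1) * y < d^(2*Suc N)" if "x < d^(2*N+1)" "y < d" for x y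
    using idx_lt[OF that] by (simp add: mult_ac)
  have "marg d (2*Suc N) 0 (2*N+1) (exM d (Suc N)) $$ (a,b) = (\<Sum>y<d. exM d (Suc N) $$ (a + d^(2*N+1)*y, b + d^(2*N+1)*y))"
    using ab by (simp add: marg_index)
  also have "\<dots> = complex_of_real (\<Sum>y<d. ue d (Suc N) (a + d^(2*N+1)*y) (b + d^(2*N+1)*y))"
    using ab lt by (simp add: exM_def)
  also have "(\<Sum>y<d. ue d (Suc N) (a + d^(2*N+1)*y) (b + d^(2*N+1)*y)) = (\<Sum>y<d. ue d (Suc N) (a mod ?D + ?D * (a div ?D + d * y)) (b mod ?D + ?D * (b div ?D + d * y)))"
    by (intro sum.cong refl, simp only: ex)
  also have "\<dots> = complex_of_real (if a div ?D = b div ?D then ue d N (a mod ?D) (b mod ?D) / real d else 0)"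
    by (subst ue_E2[OF N d am ad], rule refl)
  also have "\<dots> = tensor_maxmixed d (2*N) (exM d N) $$ (a,b)"
    using ab am by (simp add: tensor_maxmixed_def exM_def)
  finally show "marg d (2*Suc N) 0 (2*N+1) (exM d (Suc N)) $$ (a,b) = tensor_maxmixed d (2*N) (exM d N) $$ (a,b)" .
qed (auto simp: tensor_maxmixed_def marg_def)

lemma exM_j1:
  assumes n: "n \<ge> 1" and d: "d > 0"
  shows "marg d (2*n) 0 1 (exM d n) = tensor_maxmixed d 0 (marg d (2*n) 0 0 (exM d n))"
proof -
  have "marg d (2*n) 0 1 (exM d n) = marg d 2 0 1 (marg d (2*n) 0 2 (exM d n))"
    by (rule marg00, use n in auto)
  also have "marg d (2*n) 0 2 (exM d n) = exM d 1" using exM_marg[of 1 n d] n d by simp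
  finally have e1: "marg d (2*n) 0 1 (exM d n) = marg d 2 0 1 (exM d 1)" .
  have tr: "marg d (2*n) 0 0 (exM d n) $$ (0,0) = 1"
  proof -
    have "marg d (2*n) 0 0 (exM d n) $$ (0,0) = (\<Sum>y<d^(2*n). exM d n $$ (y,y))" by (simp add: marg_index)
    also have "\<dots> = complex_of_real (\<Sum>y<d^(2*n). ue d n y y)" by (simp add: exM_def)
    finally show ?thesis using ue_tr[OF n d] by simp
  qed
  show ?thesis unfolding e1
  proof (rule eq_matI)
    fix a b assume "a < dim_row (tensor_maxmixed d 0 (marg d (2*n) 0 0 (exM d n)))" "b < dim_col (tensor_maxmixed d 0 (marg d (2*n) 0 0 (exM d n)))"
    then have ab: "a < d" "b < d" by (auto simp: tensor_maxmixed_def)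
    have lt: "x + d * y < d^2" if "x < d" "y < d" for x y using idx_lt[OF that] by (simp add: power2_eq_square)
    have lt2: "x + d * y < d * d" if "x < d" "y < d" for x y using idx_lt[OF that] by simp
    have "marg d 2 0 1 (exM d 1) $$ (a,b) = (\<Sum>y<d. exM d 1 $$ (a + d*y, b + d*y))"
      using ab by (simp add: marg_index)
    also have "\<dots> = (\<Sum>y<d. complex_of_real (if a = b then 1 / real d^2 else 0))"
      using ab lt lt2 by (intro sum.cong refl, auto simp: exM_def ue_one'[OF d])
    also have "\<dots> = (if a = b then complex_of_real (1 / real d) else 0)"
      using d by (simp add: power2_eq_square)
    also have "\<dots> = tensor_maxmixed d 0 (marg d (2*n) 0 0 (exM d n)) $$ (a,b)"
      using ab tr by (simp add: tensor_maxmixed_def)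
    finally show "marg d 2 0 1 (exM d 1) $$ (a,b) = tensor_maxmixed d 0 (marg d (2*n) 0 0 (exM d n)) $$ (a,b)" .
  qed (auto simp: tensor_maxmixed_def marg_def)
qed

lemma exM_pair:
  assumes j: "1 \<le> j" and d: "d > 0"
  shows "marg d (2*j) (2*j-2) 2 (exM d j) = PM d"
proof (cases "j = 1")
  case True
  show ?thesis unfolding True
  proof (rule eq_matI)
    fix a b assume "a < dim_row (PM d)" "b < dim_col (PM d)"
    then have ab: "a < d^2" "b < d^2" by (auto simp: PM_def)
    then have ab2: "a < d*d" "b < d*d" by (auto simp: power2_eq_square)
    have "marg d 2 0 2 (exM d 1) = exM d 1" by (rule marg_full, use exM_carrier[of d 1] in simp)
    then show "marg d (2*1) (2*1-2) 2 (exM d 1) $$ (a,b) = PM d $$ (a,b)"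
      using ab ab2 by (simp add: exM_def PM_def ue_one'[OF d])
  qed (auto simp: PM_def marg_def)
next
  case False
  then obtain N where jN: "j = Suc N" and N: "N \<ge> 1" using j by (cases j, auto)
  show ?thesis unfolding jN
  proof (rule eq_matI)
    fix a b assume "a < dim_row (PM d)" "b < dim_col (PM d)"
    then have ab: "a < d^2" "b < d^2" by (auto simp: PM_def)
    then have ab2: "a < d*d" "b < d*d" by (auto simp: power2_eq_square)
    have lt: "x + d^(2*N) * a < d^(2*Suc N)" if "x < d^(2*N)" "a < d*d" for x a
      using idx_lt[OF that] by (simp add: power_add mult_ac)
    have "marg d (2*Suc N) (2*Suc N-2) 2 (exM d (Suc N)) $$ (a,b) = (\<Sum>x<d^(2*N). exM d (Suc N) $$ (x + d^(2*N)*a, x + d^(2*N)*b))"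
      using ab by (simp add: marg_index)
    also have "\<dots> = complex_of_real (\<Sum>x<d^(2*N). ue d (Suc N) (x + d^(2*N)*a) (x + d^(2*N)*b))"
      using ab2 lt by (simp add: exM_def)
    also have "\<dots> = PM d $$ (a,b)" using ue_pair[OF N d ab2] ab by (simp add: PM_def)
    finally show "marg d (2*Suc N) (2*Suc N-2) 2 (exM d (Suc N)) $$ (a,b) = PM d $$ (a,b)" .
  qed (auto simp: PM_def marg_def)
qed

lemma example:
  assumes n: "n \<ge> 1" and d: "d \<ge> 2"
  shows "process_tensor d n (exM d n) \<and> non_markovianity d n (exM d n) = 2 * (real n - 1) * ln (real d)"
proof -
  have d0: "d > 0" using d by simp
  have st: "density_op (d^(2*n)) (exM d n)" and SU: "vn_entropy (exM d n) = 2 * ln (real d)"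
    using exM_state[OF n d0] by auto
  have cond: "marg d (2 * n) 0 (2 * j - 1) (exM d n) = tensor_maxmixed d (2 * j - 2) (marg d (2 * n) 0 (2 * j - 2) (exM d n))"
    if j: "j \<in> {1..n}" for j
  proof (cases "j = 1")
    case True then show ?thesis using exM_j1[OF n d0] by simp
  next
    case False
    then obtain N where jN: "j = Suc N" and N: "N \<ge> 1" using j by (cases j, auto)
    have "marg d (2*n) 0 (2*j-1) (exM d n) = marg d (2*j) 0 (2*j-1) (marg d (2*n) 0 (2*j) (exM d n))"
      by (rule marg00, use j in auto)
    also have "marg d (2*n) 0 (2*j) (exM d n) = exM d j" by (rule exM_marg, use j d0 in auto)
    also have "marg d (2*j) 0 (2*j-1) (exM d j) = tensor_maxmixed d (2*N) (exM d N)"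
      unfolding jN using exM_E2[OF N d0] by simp
    also have "exM d N = marg d (2*n) 0 (2*j-2) (exM d n)"
      using exM_marg[of N n d] N j jN d0 by simp
    finally show ?thesis using jN by simp
  qed
  have pair: "vn_entropy (marg d (2*n) (2*j-2) 2 (exM d n)) = 2 * ln (real d)" if j: "j \<in> {1..n}" for j
  proof -
    have "marg d (2*n) (2*j-2) 2 (exM d n) = marg d (2*j-2+2) (2*j-2) 2 (marg d (2*n) 0 (2*j-2+2) (exM d n))"
      by (rule marg_comp, use j in auto)
    also have "2*j-2+2 = 2*j" using j by auto
    also have "marg d (2*n) 0 (2*j) (exM d n) = exM d j" by (rule exM_marg, use j d0 in auto)
    also have "marg d (2*j) (2*j-2) 2 (exM d j) = PM d" by (rule exM_pair, use j d0 in auto)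
    finally show ?thesis using PM_state[OF d0] by simp
  qed
  have "process_tensor d n (exM d n)" unfolding process_tensor_def using st cond by auto
  moreover have "non_markovianity d n (exM d n) = 2 * (real n - 1) * ln (real d)"
  proof -
    have "(\<Sum>j = 1..n. vn_entropy (marg d (2 * n) (2 * j - 2) 2 (exM d n))) = (\<Sum>j = 1..n. 2 * ln (real d))"
      by (rule sum.cong[OF refl], rule pair)
    also have "\<dots> = real n * (2 * ln (real d))" by simp
    finally show ?thesis unfolding non_markovianity_def SU by (simp add: algebra_simps)
  qed
  ultimately show ?thesis by simp
qed

theorem theorem1:
  fixes n d :: nat
  assumes "n \<ge> 1" and "d \<ge> 2"
  shows "(\<forall>U. process_tensor d n U \<longrightarrow>
            non_markovianity d n U \<le> 2 * (real n - 1) * ln (real d))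
       \<and> (\<exists>U. process_tensor d n U \<and>
            non_markovianity d n U = 2 * (real n - 1) * ln (real d))"
  using upper_bound[OF assms] example[OF assms] by blast

end
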